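(* Let $d$ be a positive integer and $n \leq d$ a positive integer. Let $G$ be a graph on $d+2$ vertices whose adjacency matrix $A_G$ has eigenvalues $\lambda_1 \geq \lambda_2 \geq \dots \geq \lambda_{d+2}$. If $G$ has a spherical representation in $\mathbb{R}^d$, then $G$ is (spherically) representable in $\mathbb{R}^n$ if and only if the multiplicity of $\lambda_2$ as an eigenvalue of $A_G$ (excluding $\lambda_1$, i.e. counted one less, if $\lambda_1 = \lambda_2$) is at least $d+1-n$.
   Context: Graphs are finite and simple; $A_G$ is the adjacency matrix and its eigenvalues are listed with multiplicity. A finite set $S \subset \mathbb{R}^m$ is a 2-distance set if the set $\{\|p-q\| : p,q \in S, p \neq q\}$ has exactly two elements $\alpha_1 > \alpha_2$; its distance ratio is $k = \alpha_1/\alpha_2$. The associated graph of $S$ has vertex set $S$, with $p,q$ adjacent iff $\|p-q\| = \alpha_1$. A graph $G$ is representable in $\mathbb{R}^m$ if there is a 2-distance set in $\mathbb{R}^m$ whose associated graph is $G$; it has a spherical representation (is spherically representable) in $\mathbb{R}^m$ if such a set can be chosen with all its points on an $(m-1)$-dimensional sphere in $\mathbb{R}^m$. *)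

theory Defs
  imports Complex_Main "Jordan_Normal_Form.Char_Poly"
begin

definition simple_graph :: "nat \<Rightarrow> (nat \<Rightarrow> nat \<Rightarrow> bool) \<Rightarrow> bool" where
  "simple_graph N E \<longleftrightarrow> (\<forall>i<N. \<forall>j<N. E i j \<longrightarrow> E j i) \<and> (\<forall>i<N. \<not> E i i)"

definition adj_matrix :: "nat \<Rightarrow> (nat \<Rightarrow> nat \<Rightarrow> bool) \<Rightarrow> real mat" where
  "adj_matrix N E = mat N N (\<lambda>(i, j). if E i j then 1 else 0)"

(* Points of R^m are functions nat => real vanishing at coordinates >= m. *)
definition in_Rm :: "nat \<Rightarrow> (nat \<Rightarrow> real) \<Rightarrow> bool" where
  "in_Rm m x \<longleftrightarrow> (\<forall>k\<ge>m. x k = 0)"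

definition edist :: "nat \<Rightarrow> (nat \<Rightarrow> real) \<Rightarrow> (nat \<Rightarrow> real) \<Rightarrow> real" where
  "edist m x y = sqrt (\<Sum>k<m. (x k - y k)^2)"

definition two_dist_rep :: "nat \<Rightarrow> nat \<Rightarrow> (nat \<Rightarrow> nat \<Rightarrow> bool) \<Rightarrow> (nat \<Rightarrow> nat \<Rightarrow> real) \<Rightarrow> bool" where
  "two_dist_rep m N E p \<longleftrightarrow>
     inj_on p {..<N} \<and> (\<forall>i<N. in_Rm m (p i)) \<and>
     (\<exists>a1 a2. a1 > a2 \<and>
        {edist m (p i) (p j) | i j. i < N \<and> j < N \<and> i \<noteq> j} = {a1, a2} \<and>
        (\<forall>i<N. \<forall>j<N. i \<noteq> j \<longrightarrow> (E i j \<longleftrightarrow> edist m (p i) (p j) = a1)))"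

definition representable :: "nat \<Rightarrow> nat \<Rightarrow> (nat \<Rightarrow> nat \<Rightarrow> bool) \<Rightarrow> bool" where
  "representable m N E \<longleftrightarrow> (\<exists>p. two_dist_rep m N E p)"

definition spherically_representable :: "nat \<Rightarrow> nat \<Rightarrow> (nat \<Rightarrow> nat \<Rightarrow> bool) \<Rightarrow> bool" where
  "spherically_representable m N E \<longleftrightarrow>
     (\<exists>p c r. two_dist_rep m N E p \<and> in_Rm m c \<and> r > 0 \<and> (\<forall>i<N. edist m (p i) c = r))"

end

theory Submission
  imports Defs "Jordan_Normal_Form.Jordan_Normal_Form_Existence" "Jordan_Normal_Form.Jordan_Normal_Form_Uniqueness"
begin

lemma jm_diag:
  assumes "\<forall>x\<in>set n_as. fst x = 1"
  shows "jordan_matrix n_as = mat (length n_as) (length n_as) (\<lambda>(i,j). if i = j then snd (n_as!i) else (0::'a::{zero,one}))"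
  using assms
proof (induction n_as)
  case Nil
  show ?case unfolding jordan_matrix_def by (intro eq_matI) auto
next
  case (Cons x xs)
  obtain k a where x: "x = (k,a)" by force
  with Cons have k: "k = 1" by auto
  have IH: "jordan_matrix xs = mat (length xs) (length xs) (\<lambda>(i,j). if i = j then snd (xs!i) else 0)"
    using Cons by auto
  have JM: "jordan_matrix (x#xs) = four_block_mat (jordan_block 1 a) (0\<^sub>m 1 (length xs)) (0\<^sub>m (length xs) 1) (jordan_matrix xs)"
    unfolding x k jordan_matrix_def[of "(1,a)#xs"] using IH by (simp add: Let_def jordan_matrix_def)
  show ?case unfolding JM IH
    by (intro eq_matI) (auto simp: x k nth_Cons')
qed

lemma sum_list_min12:
  assumes "\<exists>x\<in>set L. (2::nat) \<le> x"
  shows "sum_list (map (min 1) L) < sum_list (map (min 2) L)"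
  using assms
proof (induction L)
  case Nil then show ?case by simp
next
  case (Cons y L)
  have mono: "sum_list (map (min 1) L) \<le> sum_list (map (min (2::nat)) L)"
    by (induction L) auto
  show ?case
  proof (cases "2 \<le> y")
    case True then show ?thesis using mono by simp
  next
    case False
    then have "\<exists>x\<in>set L. 2 \<le> x" using Cons.prems by auto
    with Cons.IH show ?thesis by auto
  qed
qed

lemma sym_kernel_sq:
  fixes B :: "real mat"
  assumes B: "B \<in> carrier_mat N N" and sym: "B\<^sup>T = B"
  shows "mat_kernel (B ^\<^sub>m 2) = mat_kernel (B ^\<^sub>m 1)"
proof -
  have B2: "B ^\<^sub>m 2 = B * B" using B by (simp add: numeral_2_eq_2)
  have B1: "B ^\<^sub>m 1 = B" using B by simp
  have "v \<in> mat_kernel (B * B) \<longleftrightarrow> v \<in> mat_kernel B" for v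
  proof
    assume v: "v \<in> mat_kernel (B * B)"
    then have vc: "v \<in> carrier_vec N" and e: "(B * B) *\<^sub>v v = 0\<^sub>v N"
      using B unfolding mat_kernel_def by auto
    define w where "w = B *\<^sub>v v"
    have wc: "w \<in> carrier_vec N" unfolding w_def using B vc by auto
    have Bw: "B *\<^sub>v w = 0\<^sub>v N" unfolding w_def using e B vc
      by (simp add: assoc_mult_mat_vec)
    have "w \<bullet> w = (B\<^sup>T *\<^sub>v v) \<bullet> w" unfolding w_def sym ..
    also have "\<dots> = v \<bullet> (B *\<^sub>v w)" using transpose_vec_mult_scalar[OF B wc vc] .
    also have "\<dots> = 0" using Bw vc by simp
    finally have "w \<bullet>c w = 0" by simp
    then have "w = 0\<^sub>v N" using conjugate_square_eq_0_vec[OF wc] by simp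
    then show "v \<in> mat_kernel B" using vc B unfolding mat_kernel_def w_def by auto
  next
    assume v: "v \<in> mat_kernel B"
    then have vc: "v \<in> carrier_vec N" and e: "B *\<^sub>v v = 0\<^sub>v N"
      using B unfolding mat_kernel_def by auto
    have "(B * B) *\<^sub>v v = B *\<^sub>v (B *\<^sub>v v)" using B vc by (simp add: assoc_mult_mat_vec)
    also have "\<dots> = 0\<^sub>v N" using e B by (intro eq_vecI) auto
    finally show "v \<in> mat_kernel (B * B)" using vc B unfolding mat_kernel_def by auto
  qed
  then show ?thesis unfolding B1 B2 by auto
qed

lemma sum_list_fst_ones:
  assumes "\<forall>x\<in>set xs. fst x = (1::nat)"
  shows "sum_list (map fst (filter P xs)) = length (filter P xs)"
  using assms by (induction xs) auto

lemma sym_diag: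
  fixes A :: "real mat"
  assumes A: "A \<in> carrier_mat N N" and sym: "A\<^sup>T = A"
    and cp: "char_poly A = (\<Prod>a\<leftarrow>es. [:-a,1:])"
  obtains P Q dd where "P \<in> carrier_mat N N" "Q \<in> carrier_mat N N" "P * Q = 1\<^sub>m N" "Q * P = 1\<^sub>m N"
    "A * P = P * mat N N (\<lambda>(i,j). if i=j then dd i else 0)"
    "Q * A = mat N N (\<lambda>(i,j). if i=j then dd i else 0) * Q"
    "\<And>\<mu>. Polynomial.order \<mu> (char_poly A) = card {i. i<N \<and> dd i = \<mu>}"
proof -
  obtain n_as where jnf: "jordan_nf A n_as" using jordan_nf_exists[OF A cp] by blast
  have sizes: "\<forall>x\<in>set n_as. fst x = 1"
  proof
    fix x assume x: "x \<in> set n_as"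
    obtain k a where xka: "x = (k,a)" by force
    have k0: "k \<noteq> 0" using jnf x xka unfolding jordan_nf_def by force
    show "fst x = 1"
    proof (rule ccontr)
      assume "fst x \<noteq> 1"
      then have k2: "2 \<le> k" using k0 xka by auto
      define B where "B = char_matrix A a"
      have Bc: "B \<in> carrier_mat N N" unfolding B_def using A by simp
      have Bs: "B\<^sup>T = B"
      proof (rule eq_matI)
        fix i j assume ij: "i < dim_row B" "j < dim_col B"
        then have ij': "i < N" "j < N" using Bc by auto
        have "A $$ (j, i) = A $$ (i, j)"
          using arg_cong[OF sym, of "\<lambda>M. M $$ (i,j)"] ij' A by auto
        then show "B\<^sup>T $$ (i, j) = B $$ (i, j)"
          using ij' A unfolding B_def char_matrix_def by auto
      qed (use Bc in auto)
      have "dim_gen_eigenspace A a 2 = dim_gen_eigenspace A a 1"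
      proof -
        have "kernel_dim (B ^\<^sub>m 2) = kernel_dim (B ^\<^sub>m 1)"
          unfolding kernel_dim_def using sym_kernel_sq[OF Bc Bs] Bc by simp
        then show ?thesis unfolding dim_gen_eigenspace_def B_def .
      qed
      moreover have "sum_list (map (min 1) (map fst (filter (\<lambda>(n, e). e = a) n_as)))
          < sum_list (map (min 2) (map fst (filter (\<lambda>(n, e). e = a) n_as)))"
        by (rule sum_list_min12) (use x xka k2 in force)
      ultimately show False unfolding dim_gen_eigenspace[OF jnf] by simp
    qed
  qed
  define D where "D = mat (length n_as) (length n_as) (\<lambda>(i,j). if i = j then snd (n_as!i) else (0::real))"
  have JD: "jordan_matrix n_as = D" unfolding D_def by (rule jm_diag[OF sizes])
  from jnf obtain P Q where wit: "similar_mat_wit A D P Q"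
    unfolding jordan_nf_def similar_mat_def JD by blast
  note W = similar_mat_witD2[OF A wit]
  have L: "length n_as = N" using W(5) unfolding D_def by auto
  define dd where "dd i = snd (n_as ! i)" for i
  have DD: "D = mat N N (\<lambda>(i,j). if i=j then dd i else 0)" unfolding D_def dd_def L ..
  have AP: "A * P = P * D"
  proof -
    have "A * P = P * D * Q * P" using W by simp
    also have "\<dots> = P * D * (Q * P)"
      using W(5,6,7) by (simp add: assoc_mult_mat[of _ N N _ N _ N])
    also have "\<dots> = P * D" using W by simp
    finally show ?thesis .
  qed
  have QA: "Q * A = D * Q"
  proof -
    have "Q * A = Q * (P * D * Q)" using W by simp
    also have "\<dots> = (Q * P) * D * Q"
      using W(5,6,7) by (simp add: assoc_mult_mat[of _ N N _ N _ N])
    also have "\<dots> = D * Q" using W by simp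
    finally show ?thesis .
  qed
  have cnt: "Polynomial.order \<mu> (char_poly A) = card {i. i<N \<and> dd i = \<mu>}" for \<mu>
  proof -
    have "Polynomial.order \<mu> (char_poly A) = sum_list (map fst (filter (\<lambda>na. snd na = \<mu>) n_as))"
      by (rule jordan_nf_order[OF jnf])
    also have "\<dots> = length (filter (\<lambda>na. snd na = \<mu>) n_as)" by (rule sum_list_fst_ones[OF sizes])
    also have "\<dots> = card {i. i<N \<and> dd i = \<mu>}" unfolding length_filter_conv_card L dd_def ..
    finally show ?thesis .
  qed
  show ?thesis
    by (rule that[of P Q dd]) (use W AP QA cnt DD in auto)
qed


lemma exists_nonzero_solution:
  fixes L :: "nat \<Rightarrow> 'a \<Rightarrow> real"
  assumes "finite J" "m < card J"
  shows "\<exists>x. (\<exists>j\<in>J. x j \<noteq> 0) \<and> (\<forall>r<m. (\<Sum>j\<in>J. L r j * x j) = 0)"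
  using assms
proof (induction m arbitrary: J L)
  case 0
  then have "J \<noteq> {}" by auto
  then show ?case by (intro exI[of _ "\<lambda>_. 1"]) auto
next
  case (Suc m)
  show ?case
  proof (cases "\<forall>j\<in>J. L m j = 0")
    case True
    from Suc.IH[of J L] Suc.prems obtain x where x: "\<exists>j\<in>J. x j \<noteq> 0" "\<forall>r<m. (\<Sum>j\<in>J. L r j * x j) = 0"
      by auto
    have "\<forall>r<Suc m. (\<Sum>j\<in>J. L r j * x j) = 0"
    proof (intro allI impI)
      fix r assume "r < Suc m"
      then consider "r < m" | "r = m" by linarith
      then show "(\<Sum>j\<in>J. L r j * x j) = 0"
        by cases (use x True in auto)
    qed
    with x show ?thesis by blast
  next
    case False
    then obtain j0 where j0: "j0 \<in> J" "L m j0 \<noteq> 0" by auto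
    define J' where "J' = J - {j0}"
    define L' where "L' r j = L r j - L r j0 * L m j / L m j0" for r j
    have fJ': "finite J'" using Suc.prems unfolding J'_def by auto
    have cJ': "m < card J'" using Suc.prems j0 unfolding J'_def by (simp add: card_Diff_singleton)
    from Suc.IH[OF fJ' cJ', of L'] obtain x' where
      x': "\<exists>j\<in>J'. x' j \<noteq> 0" "\<forall>r<m. (\<Sum>j\<in>J'. L' r j * x' j) = 0" by auto
    define x where "x = x'(j0 := - (\<Sum>j\<in>J'. L m j * x' j) / L m j0)"
    have J: "J = insert j0 J'" using j0 unfolding J'_def by auto
    have j0n: "j0 \<notin> J'" unfolding J'_def by auto
    have sumJ: "(\<Sum>j\<in>J. L r j * x j) = L r j0 * x j0 + (\<Sum>j\<in>J'. L r j * x' j)" for r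
    proof -
      have "(\<Sum>j\<in>J. L r j * x j) = L r j0 * x j0 + (\<Sum>j\<in>J'. L r j * x j)"
        unfolding J using fJ' j0n by simp
      also have "(\<Sum>j\<in>J'. L r j * x j) = (\<Sum>j\<in>J'. L r j * x' j)"
        by (rule sum.cong) (use j0n in \<open>auto simp: x_def\<close>)
      finally show ?thesis .
    qed
    have "\<forall>r<Suc m. (\<Sum>j\<in>J. L r j * x j) = 0"
    proof (intro allI impI)
      fix r assume "r < Suc m"
      then consider "r < m" | "r = m" by linarith
      then show "(\<Sum>j\<in>J. L r j * x j) = 0"
      proof cases
        case 1
        have "(\<Sum>j\<in>J'. L' r j * x' j) = (\<Sum>j\<in>J'. L r j * x' j) - L r j0 / L m j0 * (\<Sum>j\<in>J'. L m j * x' j)"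
          unfolding L'_def by (simp add: sum_distrib_left sum_subtractf left_diff_distrib mult.assoc)
        then show ?thesis using x'(2) 1 unfolding sumJ by (simp add: x_def field_simps)
      next
        case 2
        then show ?thesis unfolding sumJ using j0(2) by (simp add: x_def)
      qed
    qed
    moreover have "\<exists>j\<in>J. x j \<noteq> 0"
    proof -
      obtain j where "j \<in> J'" "x' j \<noteq> 0" using x'(1) by blast
      then show ?thesis using j0n unfolding x_def J by (intro bexI[of _ j]) auto
    qed
    ultimately show ?thesis by blast
  qed
qed

lemma psd_zero:
  fixes B :: "nat \<Rightarrow> nat \<Rightarrow> real"
  assumes sym: "\<And>i j. i < N \<Longrightarrow> j < N \<Longrightarrow> B i j = B j i"
    and psd: "\<And>y. (\<Sum>i<N. \<Sum>j<N. y i * B i j * y j) \<ge> 0"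
    and z: "(\<Sum>i<N. \<Sum>j<N. x i * B i j * x j) = 0"
  shows "\<forall>i<N. (\<Sum>j<N. B i j * x j) = 0"
proof -
  define w where "w i = (\<Sum>j<N. B i j * x j)" for i
  define s where "s = (\<Sum>i<N. w i * w i)"
  define c where "c = (\<Sum>i<N. \<Sum>j<N. w i * B i j * w j)"
  have c0: "c \<ge> 0" unfolding c_def by (rule psd)
  have s0: "s \<ge> 0" unfolding s_def by (intro sum_nonneg) auto
  have cross: "(\<Sum>i<N. \<Sum>j<N. x i * B i j * w j) = s"
  proof -
    have "(\<Sum>i<N. \<Sum>j<N. x i * B i j * w j) = (\<Sum>j<N. \<Sum>i<N. x i * B i j * w j)"
      by (rule sum.swap)
    also have "\<dots> = (\<Sum>j<N. w j * (\<Sum>i<N. B j i * x i))"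
      by (rule sum.cong[OF refl]) (auto simp: sum_distrib_left sym intro!: sum.cong)
    also have "\<dots> = s" unfolding s_def w_def ..
    finally show ?thesis .
  qed
  have cross2: "(\<Sum>i<N. \<Sum>j<N. w i * B i j * x j) = s"
    unfolding s_def w_def by (simp add: sum_distrib_left mult.assoc)
  have expand: "(\<Sum>i<N. \<Sum>j<N. (x i - t * w i) * B i j * (x j - t * w j)) = 0 - 2 * t * s + t * t * c" for t
  proof -
    have "(\<Sum>i<N. \<Sum>j<N. (x i - t * w i) * B i j * (x j - t * w j)) =
        (\<Sum>i<N. \<Sum>j<N. x i * B i j * x j) - t * (\<Sum>i<N. \<Sum>j<N. x i * B i j * w j)
        - t * (\<Sum>i<N. \<Sum>j<N. w i * B i j * x j) + t * t * (\<Sum>i<N. \<Sum>j<N. w i * B i j * w j)"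
      by (simp add: algebra_simps sum.distrib sum_subtractf sum_distrib_left)
    then show ?thesis using z cross cross2 unfolding c_def by simp
  qed
  have "s = 0"
  proof (rule ccontr)
    assume "s \<noteq> 0"
    then have sp: "s > 0" using s0 by simp
    define t where "t = s / (c + 1)"
    have tp: "t > 0" unfolding t_def using sp c0 by simp
    have "0 \<le> 0 - 2 * t * s + t * t * c" using psd[of "\<lambda>i. x i - t * w i"] expand by simp
    moreover have "t * c < 2 * s" unfolding t_def using sp c0
      by (simp add: field_simps) (smt (verit) mult_nonneg_nonneg mult_pos_pos)
    then have "t * (t * c) < t * (2 * s)" using tp by simp
    ultimately show False by (simp add: algebra_simps)
  qed
  then have "\<forall>i<N. w i * w i = 0" unfolding s_def
    by (subst (asm) sum_nonneg_eq_0_iff) auto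
  then show ?thesis unfolding w_def by simp
qed

lemma exists_nonzero_solution_set:
  fixes L :: "'r \<Rightarrow> 'a \<Rightarrow> real"
  assumes "finite R" "finite J" "card R < card J"
  shows "\<exists>x. (\<exists>j\<in>J. x j \<noteq> 0) \<and> (\<forall>r\<in>R. (\<Sum>j\<in>J. L r j * x j) = 0)"
proof -
  obtain h where h: "bij_betw h {0..<card R} R" using ex_bij_betw_nat_finite[OF assms(1)] by blast
  obtain x where x: "\<exists>j\<in>J. x j \<noteq> 0" "\<forall>r<card R. (\<Sum>j\<in>J. L (h r) j * x j) = 0"
    using exists_nonzero_solution[OF assms(2,3), of "\<lambda>r. L (h r)"] by blast
  have "\<forall>r\<in>R. (\<Sum>j\<in>J. L r j * x j) = 0"
  proof
    fix r assume "r \<in> R"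
    then have "r \<in> h ` {0..<card R}" using h by (simp add: bij_betw_def)
    then obtain i where "i \<in> {0..<card R}" "r = h i" by blast
    then show "(\<Sum>j\<in>J. L r j * x j) = 0" using x(2) by simp
  qed
  with x(1) show ?thesis by blast
qed


lemma sum_swap3: "(\<Sum>i\<in>A. \<Sum>s\<in>B. \<Sum>k\<in>C. f s k i) = (\<Sum>s\<in>B. \<Sum>k\<in>C. \<Sum>i\<in>A. (f s k i :: real))"
proof -
  have "(\<Sum>i\<in>A. \<Sum>s\<in>B. \<Sum>k\<in>C. f s k i) = (\<Sum>s\<in>B. \<Sum>i\<in>A. \<Sum>k\<in>C. f s k i)" by (rule sum.swap)
  also have "\<dots> = (\<Sum>s\<in>B. \<Sum>k\<in>C. \<Sum>i\<in>A. f s k i)" by (rule sum.cong[OF refl], rule sum.swap)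
  finally show ?thesis .
qed

locale spec =
  fixes N :: nat and a :: "nat \<Rightarrow> nat \<Rightarrow> real" and V Qm :: "nat \<Rightarrow> nat \<Rightarrow> real" and dd :: "nat \<Rightarrow> real"
  assumes a_sym: "\<And>i j. i<N \<Longrightarrow> j<N \<Longrightarrow> a i j = a j i"
  and eig: "\<And>i k. i<N \<Longrightarrow> k<N \<Longrightarrow> (\<Sum>j<N. a i j * V k j) = dd k * V k i"
  and qa: "\<And>k i. k<N \<Longrightarrow> i<N \<Longrightarrow> (\<Sum>j<N. Qm k j * a j i) = dd k * Qm k i"
  and pq: "\<And>i j. i<N \<Longrightarrow> j<N \<Longrightarrow> (\<Sum>k<N. V k i * Qm k j) = (if i=j then 1 else 0)"
  and qp: "\<And>k l. k<N \<Longrightarrow> l<N \<Longrightarrow> (\<Sum>j<N. Qm k j * V l j) = (if k=l then 1 else 0)"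
begin

definition dot :: "(nat \<Rightarrow> real) \<Rightarrow> (nat \<Rightarrow> real) \<Rightarrow> real" where "dot x y = (\<Sum>i<N. x i * y i)"
definition Ax :: "(nat \<Rightarrow> real) \<Rightarrow> (nat \<Rightarrow> real)" where "Ax x = (\<lambda>i. \<Sum>j<N. a i j * x j)"
definition coef :: "(nat \<Rightarrow> real) \<Rightarrow> (nat \<Rightarrow> real)" where "coef x = (\<lambda>k. \<Sum>j<N. Qm k j * x j)"

lemma expand: assumes "i<N" shows "x i = (\<Sum>k<N. coef x k * V k i)"
proof -
  have "(\<Sum>k<N. coef x k * V k i) = (\<Sum>k<N. \<Sum>j<N. x j * (V k i * Qm k j))"
    unfolding coef_def by (simp add: sum_distrib_left sum_distrib_right mult_ac)
  also have "\<dots> = (\<Sum>j<N. x j * (\<Sum>k<N. V k i * Qm k j))"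
    by (subst sum.swap) (simp add: sum_distrib_left)
  also have "\<dots> = (\<Sum>j<N. if j = i then x j else 0)"
    by (rule sum.cong[OF refl]) (use assms pq in auto)
  also have "\<dots> = x i" using assms by simp
  finally show ?thesis by simp
qed

lemma coef_zero: assumes "\<forall>k<N. coef x k = 0" "i<N" shows "x i = 0"
  using expand[OF assms(2), of x] assms(1) by simp

lemma coef_V: "k<N \<Longrightarrow> l<N \<Longrightarrow> coef (V l) k = (if k=l then 1 else 0)"
  unfolding coef_def using qp by simp

lemma coef_lin: "coef (\<lambda>i. s * x i + t * y i) k = s * coef x k + t * coef y k"
  unfolding coef_def by (simp add: algebra_simps sum.distrib sum_distrib_left)

lemma coef_cong: "(\<And>i. i<N \<Longrightarrow> x i = y i) \<Longrightarrow> coef x = coef y"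
  unfolding coef_def by (auto intro!: sum.cong)

lemma coef_Ax: assumes "k<N" shows "coef (Ax x) k = dd k * coef x k"
proof -
  have "coef (Ax x) k = (\<Sum>j<N. \<Sum>i<N. Qm k j * a j i * x i)"
    unfolding coef_def Ax_def by (simp add: sum_distrib_left mult_ac)
  also have "\<dots> = (\<Sum>i<N. x i * (\<Sum>j<N. Qm k j * a j i))"
    by (subst sum.swap) (simp add: sum_distrib_left mult_ac)
  also have "\<dots> = (\<Sum>i<N. x i * (dd k * Qm k i))"
    by (rule sum.cong[OF refl]) (use assms qa in auto)
  also have "\<dots> = dd k * coef x k" unfolding coef_def by (simp add: sum_distrib_left mult_ac)
  finally show ?thesis .
qed

lemma eigvec_coef:
  assumes "\<forall>i<N. Ax x i = \<theta> * x i" "k<N" "dd k \<noteq> \<theta>"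
  shows "coef x k = 0"
proof -
  have "coef (Ax x) = coef (\<lambda>i. \<theta> * x i + 0 * x i)" by (rule coef_cong) (use assms in auto)
  then have "dd k * coef x k = \<theta> * coef x k" using coef_Ax[OF assms(2), of x] coef_lin[of \<theta> x 0 x k] by simp
  then show ?thesis using assms(3) by simp
qed

lemma dot_Ax_sym: "dot (Ax x) y = dot x (Ax y)"
proof -
  have "dot (Ax x) y = (\<Sum>i<N. \<Sum>j<N. a i j * x j * y i)"
    unfolding dot_def Ax_def by (simp add: sum_distrib_right)
  also have "\<dots> = (\<Sum>j<N. \<Sum>i<N. a i j * x j * y i)" by (rule sum.swap)
  also have "\<dots> = (\<Sum>j<N. \<Sum>i<N. x j * (a j i * y i))"
    by (intro sum.cong refl) (auto simp: a_sym)
  also have "\<dots> = dot x (Ax y)" unfolding dot_def Ax_def by (simp add: sum_distrib_left)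
  finally show ?thesis .
qed

lemma Ax_V: "i<N \<Longrightarrow> k<N \<Longrightarrow> Ax (V k) i = dd k * V k i"
  unfolding Ax_def using eig by simp

lemma dot_cong: "(\<And>i. i<N \<Longrightarrow> x i = x' i) \<Longrightarrow> (\<And>i. i<N \<Longrightarrow> y i = y' i) \<Longrightarrow> dot x y = dot x' y'"
  unfolding dot_def by (auto intro!: sum.cong)

lemma orth: assumes "k<N" "l<N" "dd k \<noteq> dd l" shows "dot (V k) (V l) = 0"
proof -
  have "dot (Ax (V k)) (V l) = dot (\<lambda>i. dd k * V k i) (V l)"
    by (rule dot_cong) (use assms Ax_V in auto)
  also have "\<dots> = dd k * dot (V k) (V l)" unfolding dot_def by (simp add: sum_distrib_left mult_ac)
  finally have 1: "dot (Ax (V k)) (V l) = dd k * dot (V k) (V l)" .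
  have "dot (V k) (Ax (V l)) = dot (V k) (\<lambda>i. dd l * V l i)"
    by (rule dot_cong) (use assms Ax_V in auto)
  also have "\<dots> = dd l * dot (V k) (V l)" unfolding dot_def by (simp add: sum_distrib_left mult_ac)
  finally have 2: "dot (V k) (Ax (V l)) = dd l * dot (V k) (V l)" .
  have "dd k * dot (V k) (V l) = dd l * dot (V k) (V l)" using 1 2 dot_Ax_sym[of "V k" "V l"] by linarith
  then show ?thesis using assms(3) by auto
qed

lemma V_nonzero: assumes "k<N" shows "\<exists>i<N. V k i \<noteq> 0"
proof (rule ccontr)
  assume "\<not> ?thesis"
  then have "(\<Sum>j<N. Qm k j * V k j) = 0" by simp
  then show False using qp[OF assms assms] by simp
qed

lemma dot_self_nonneg: "dot x x \<ge> 0"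
  unfolding dot_def by (simp add: sum_nonneg)

lemma dot_self_pos: assumes "i<N" "x i \<noteq> 0" shows "dot x x > 0"
proof -
  have "dot x x \<noteq> 0"
  proof
    assume "dot x x = 0"
    then have "\<forall>i<N. x i * x i = 0" unfolding dot_def using sum_nonneg_eq_0_iff[of "{..<N}" "\<lambda>i. x i * x i"] by auto
    then show False using assms by auto
  qed
  then show ?thesis using dot_self_nonneg[of x] by linarith
qed

lemma Ax_expand: assumes "i<N" shows "Ax x i = (\<Sum>k<N. coef x k * dd k * V k i)"
proof -
  have "Ax x i = (\<Sum>j<N. a i j * (\<Sum>k<N. coef x k * V k j))"
    unfolding Ax_def by (intro sum.cong refl) (simp add: expand[symmetric])
  also have "\<dots> = (\<Sum>k<N. coef x k * (\<Sum>j<N. a i j * V k j))"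
    by (simp add: sum_distrib_left sum_distrib_right mult_ac) (rule sum.swap)
  also have "\<dots> = (\<Sum>k<N. coef x k * dd k * V k i)"
    by (intro sum.cong refl) (simp add: eig assms)
  finally show ?thesis .
qed

lemma rayleigh_eq:
  "lm * dot x x - dot x (Ax x) = (\<Sum>\<mu>\<in>dd ` {..<N}. (lm - \<mu>) * (\<Sum>i<N. (\<Sum>s\<in>{s. s<N \<and> dd s = \<mu>}. coef x s * V s i) * (\<Sum>s\<in>{s. s<N \<and> dd s = \<mu>}. coef x s * V s i)))"
proof -
  define \<alpha> where "\<alpha> = coef x"
  define G where "G s k = dot (V s) (V k)" for s k
  have "lm * dot x x - dot x (Ax x) = (\<Sum>i<N. x i * (lm * x i - Ax x i))"
    unfolding dot_def by (simp add: sum_distrib_left sum_subtractf algebra_simps)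
  also have "\<dots> = (\<Sum>i<N. (\<Sum>s<N. \<alpha> s * V s i) * (\<Sum>k<N. \<alpha> k * (lm - dd k) * V k i))"
  proof (intro sum.cong refl)
    fix i assume i: "i \<in> {..<N}"
    have "lm * x i - Ax x i = (\<Sum>k<N. \<alpha> k * (lm - dd k) * V k i)"
      using expand[of i x] Ax_expand[of i x] i unfolding \<alpha>_def
      by (simp add: sum_distrib_left sum_subtractf algebra_simps)
    then show "x i * (lm * x i - Ax x i) = (\<Sum>s<N. \<alpha> s * V s i) * (\<Sum>k<N. \<alpha> k * (lm - dd k) * V k i)"
      using expand[of i x] i unfolding \<alpha>_def by simp
  qed
  also have "\<dots> = (\<Sum>s<N. \<Sum>k<N. \<alpha> s * \<alpha> k * (lm - dd k) * G s k)"
  proof -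
    have "(\<Sum>i<N. (\<Sum>s<N. \<alpha> s * V s i) * (\<Sum>k<N. \<alpha> k * (lm - dd k) * V k i))
        = (\<Sum>i<N. \<Sum>s<N. \<Sum>k<N. \<alpha> s * \<alpha> k * (lm - dd k) * (V s i * V k i))"
      by (simp add: sum_product mult_ac)
    also have "\<dots> = (\<Sum>s<N. \<Sum>k<N. \<Sum>i<N. \<alpha> s * \<alpha> k * (lm - dd k) * (V s i * V k i))"
      by (rule sum_swap3)
    also have "\<dots> = (\<Sum>s<N. \<Sum>k<N. \<alpha> s * \<alpha> k * (lm - dd k) * G s k)"
      unfolding G_def dot_def by (simp add: sum_distrib_left)
    finally show ?thesis .
  qed
  also have "\<dots> = (\<Sum>s<N. \<Sum>k\<in>{k. k<N \<and> dd k = dd s}. \<alpha> s * \<alpha> k * (lm - dd s) * G s k)"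
  proof (rule sum.cong[OF refl])
    fix s assume s: "s \<in> {..<N}"
    have "(\<Sum>k<N. \<alpha> s * \<alpha> k * (lm - dd k) * G s k) = (\<Sum>k\<in>{k. k<N \<and> dd k = dd s}. \<alpha> s * \<alpha> k * (lm - dd k) * G s k)"
    proof (rule sum.mono_neutral_right)
      show "\<forall>k\<in>{..<N} - {k. k<N \<and> dd k = dd s}. \<alpha> s * \<alpha> k * (lm - dd k) * G s k = 0"
      proof
        fix k assume k: "k \<in> {..<N} - {k. k<N \<and> dd k = dd s}"
        then have "dd s \<noteq> dd k" by auto
        then have "G s k = 0" using orth[of s k] s k unfolding G_def by auto
        then show "\<alpha> s * \<alpha> k * (lm - dd k) * G s k = 0" by simp
      qed
    qed auto
    then show "(\<Sum>k<N. \<alpha> s * \<alpha> k * (lm - dd k) * G s k) = (\<Sum>k\<in>{k. k<N \<and> dd k = dd s}. \<alpha> s * \<alpha> k * (lm - dd s) * G s k)"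
      by simp
  qed
  also have "\<dots> = (\<Sum>\<mu>\<in>dd ` {..<N}. \<Sum>s\<in>{s\<in>{..<N}. dd s = \<mu>}. \<Sum>k\<in>{k. k<N \<and> dd k = dd s}. \<alpha> s * \<alpha> k * (lm - dd s) * G s k)"
    by (rule sum.group[symmetric]) auto
  also have "\<dots> = (\<Sum>\<mu>\<in>dd ` {..<N}. (lm - \<mu>) * (\<Sum>i<N. (\<Sum>s\<in>{s. s<N \<and> dd s = \<mu>}. \<alpha> s * V s i) * (\<Sum>s\<in>{s. s<N \<and> dd s = \<mu>}. \<alpha> s * V s i)))"
  proof (rule sum.cong[OF refl])
    fix \<mu> assume "\<mu> \<in> dd ` {..<N}"
    define T where "T = {s. s<N \<and> dd s = \<mu>}"
    have fT: "finite T" unfolding T_def by auto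
    have "(\<Sum>s\<in>{s\<in>{..<N}. dd s = \<mu>}. \<Sum>k\<in>{k. k<N \<and> dd k = dd s}. \<alpha> s * \<alpha> k * (lm - dd s) * G s k)
       = (\<Sum>s\<in>T. \<Sum>k\<in>T. (lm - \<mu>) * (\<alpha> s * \<alpha> k * G s k))"
      unfolding T_def by (intro sum.cong) (auto simp: mult_ac)
    also have "\<dots> = (lm - \<mu>) * (\<Sum>s\<in>T. \<Sum>k\<in>T. \<Sum>i<N. \<alpha> s * V s i * (\<alpha> k * V k i))"
      unfolding G_def dot_def by (simp add: sum_distrib_left mult_ac)
    also have "(\<Sum>s\<in>T. \<Sum>k\<in>T. \<Sum>i<N. \<alpha> s * V s i * (\<alpha> k * V k i)) = (\<Sum>i<N. (\<Sum>s\<in>T. \<alpha> s * V s i) * (\<Sum>s\<in>T. \<alpha> s * V s i))"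
    proof -
      have "(\<Sum>s\<in>T. \<Sum>k\<in>T. \<Sum>i<N. \<alpha> s * V s i * (\<alpha> k * V k i)) = (\<Sum>i<N. \<Sum>s\<in>T. \<Sum>k\<in>T. \<alpha> s * V s i * (\<alpha> k * V k i))"
        by (rule sum_swap3[symmetric])
      also have "\<dots> = (\<Sum>i<N. (\<Sum>s\<in>T. \<alpha> s * V s i) * (\<Sum>s\<in>T. \<alpha> s * V s i))"
        by (simp add: sum_product)
      finally show ?thesis .
    qed
    finally show "(\<Sum>s\<in>{s\<in>{..<N}. dd s = \<mu>}. \<Sum>k\<in>{k. k<N \<and> dd k = dd s}. \<alpha> s * \<alpha> k * (lm - dd s) * G s k)
      = (lm - \<mu>) * (\<Sum>i<N. (\<Sum>s\<in>{s. s<N \<and> dd s = \<mu>}. \<alpha> s * V s i) * (\<Sum>s\<in>{s. s<N \<and> dd s = \<mu>}. \<alpha> s * V s i))"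
      unfolding T_def .
  qed
  finally show ?thesis unfolding \<alpha>_def .
qed

lemma rayleigh:
  assumes "\<forall>k<N. dd k \<le> lm"
  shows "dot x (Ax x) \<le> lm * dot x x"
proof -
  have "lm * dot x x - dot x (Ax x) \<ge> 0"
    unfolding rayleigh_eq
  proof (rule sum_nonneg)
    fix \<mu> assume "\<mu> \<in> dd ` {..<N}"
    then have m: "lm - \<mu> \<ge> 0" using assms by auto
    show "0 \<le> (lm - \<mu>) * (\<Sum>i<N. (\<Sum>s\<in>{s. s<N \<and> dd s = \<mu>}. coef x s * V s i) * (\<Sum>s\<in>{s. s<N \<and> dd s = \<mu>}. coef x s * V s i))"
      by (rule mult_nonneg_nonneg[OF m]) (rule sum_nonneg, simp)
  qed
  then show ?thesis by simp
qed

end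

context spec begin

definition sumN :: "(nat \<Rightarrow> real) \<Rightarrow> real" where "sumN x = (\<Sum>i<N. x i)"

lemma coef_comb:
  assumes "S \<subseteq> {..<N}" "k<N"
  shows "coef (\<lambda>i. \<Sum>s\<in>S. c s * V s i) k = (if k \<in> S then c k else 0)"
proof -
  have fS: "finite S" using assms(1) finite_subset by blast
  have "coef (\<lambda>i. \<Sum>s\<in>S. c s * V s i) k = (\<Sum>s\<in>S. c s * coef (V s) k)"
    unfolding coef_def by (simp add: sum_distrib_left mult_ac) (rule sum.swap)
  also have "\<dots> = (\<Sum>s\<in>S. if s = k then c k else 0)"
    by (rule sum.cong[OF refl]) (use assms coef_V in auto)
  also have "\<dots> = (if k \<in> S then c k else 0)" using fS by simp
  finally show ?thesis .
qed

lemma sumN_expand: "sumN x = (\<Sum>k<N. coef x k * sumN (V k))"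
proof -
  have "sumN x = (\<Sum>i<N. \<Sum>k<N. coef x k * V k i)"
    unfolding sumN_def by (rule sum.cong[OF refl]) (simp add: expand[symmetric])
  also have "\<dots> = (\<Sum>k<N. coef x k * sumN (V k))"
    unfolding sumN_def by (subst sum.swap) (simp add: sum_distrib_left)
  finally show ?thesis .
qed

lemma nonzero_of_coef: assumes "k<N" "coef x k \<noteq> 0" shows "\<exists>i<N. x i \<noteq> 0"
proof (rule ccontr)
  assume "\<not> ?thesis"
  then have "coef x k = 0" unfolding coef_def by simp
  then show False using assms by simp
qed

lemma strict:
  assumes ge: "\<forall>k<N. coef x k \<noteq> 0 \<longrightarrow> dd k \<ge> \<theta>"
    and k0: "k0 < N" "coef x k0 \<noteq> 0" "dd k0 > \<theta>"
  shows "dot x (Ax x) > \<theta> * dot x x"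
proof -
  define y where "y \<mu> i = (\<Sum>s\<in>{s. s<N \<and> dd s = \<mu>}. coef x s * V s i)" for \<mu> i
  define f where "f \<mu> = (\<theta> - \<mu>) * (\<Sum>i<N. y \<mu> i * y \<mu> i)" for \<mu>
  have eq: "\<theta> * dot x x - dot x (Ax x) = (\<Sum>\<mu>\<in>dd ` {..<N}. f \<mu>)"
    unfolding rayleigh_eq f_def y_def ..
  have fle: "f \<mu> \<le> 0" for \<mu>
  proof (cases "\<mu> < \<theta>")
    case True
    have "y \<mu> i = 0" for i
      unfolding y_def by (rule sum.neutral) (use ge True in force)
    then show ?thesis unfolding f_def by simp
  next
    case False
    have "(\<Sum>i<N. y \<mu> i * y \<mu> i) \<ge> 0" by (rule sum_nonneg) simp
    then show ?thesis unfolding f_def using False by (simp add: mult_nonpos_nonneg)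
  qed
  define \<mu>0 where "\<mu>0 = dd k0"
  have pos: "(\<Sum>i<N. y \<mu>0 i * y \<mu>0 i) > 0"
  proof -
    have "coef (y \<mu>0) k0 = coef x k0"
      unfolding y_def by (subst coef_comb) (use k0 in \<open>auto simp: \<mu>0_def\<close>)
    then obtain i where i: "i<N" "y \<mu>0 i \<noteq> 0" using nonzero_of_coef[OF k0(1)] k0 by metis
    have "(\<Sum>i<N. y \<mu>0 i * y \<mu>0 i) \<noteq> 0"
    proof
      assume "(\<Sum>i<N. y \<mu>0 i * y \<mu>0 i) = 0"
      then have "\<forall>i<N. y \<mu>0 i * y \<mu>0 i = 0"
        using sum_nonneg_eq_0_iff[of "{..<N}" "\<lambda>i. y \<mu>0 i * y \<mu>0 i"] by auto
      then show False using i by auto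
    qed
    moreover have "(\<Sum>i<N. y \<mu>0 i * y \<mu>0 i) \<ge> 0" by (rule sum_nonneg) simp
    ultimately show ?thesis by linarith
  qed
  have f0: "f \<mu>0 < 0" unfolding f_def using pos k0(3) \<mu>0_def by (simp add: mult_neg_pos)
  have m0: "\<mu>0 \<in> dd ` {..<N}" using k0 \<mu>0_def by auto
  have "(\<Sum>\<mu>\<in>dd ` {..<N}. f \<mu>) = f \<mu>0 + (\<Sum>\<mu>\<in>dd ` {..<N} - {\<mu>0}. f \<mu>)"
    using m0 by (simp add: sum.remove)
  also have "(\<Sum>\<mu>\<in>dd ` {..<N} - {\<mu>0}. f \<mu>) \<le> 0" by (rule sum_nonpos) (use fle in auto)
  finally have "(\<Sum>\<mu>\<in>dd ` {..<N}. f \<mu>) < 0" using f0 by linarith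
  then show ?thesis using eq by linarith
qed

lemma form_eq:
  "(\<Sum>i<N. \<Sum>j<N. y i * ((if i = j then t else 0) - a i j + c) * y j) = t * dot y y - dot y (Ax y) + c * (sumN y)^2"
proof -
  have 1: "(\<Sum>i<N. \<Sum>j<N. y i * (if i = j then t else 0) * y j) = t * dot y y"
    unfolding dot_def by (simp add: sum_distrib_left if_distrib if_distribR mult_ac cong: if_cong)
  have 2: "(\<Sum>i<N. \<Sum>j<N. y i * a i j * y j) = dot y (Ax y)"
    unfolding dot_def Ax_def by (simp add: sum_distrib_left mult_ac)
  have 3: "(\<Sum>i<N. \<Sum>j<N. y i * c * y j) = c * (sumN y)^2"
    unfolding sumN_def power2_eq_square by (simp add: sum_distrib_left sum_distrib_right mult_ac)
  have "(\<Sum>i<N. \<Sum>j<N. y i * ((if i = j then t else 0) - a i j + c) * y j)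
      = (\<Sum>i<N. \<Sum>j<N. y i * (if i = j then t else 0) * y j) - (\<Sum>i<N. \<Sum>j<N. y i * a i j * y j) + (\<Sum>i<N. \<Sum>j<N. y i * c * y j)"
    by (simp add: algebra_simps sum.distrib sum_subtractf)
  then show ?thesis using 1 2 3 by simp
qed

end


locale core = spec +
  fixes lam :: "nat \<Rightarrow> real" and \<theta> s' :: real
  assumes cnt: "\<And>\<mu>. card {i. i<N \<and> dd i = \<mu>} = card {i. i<N \<and> lam i = \<mu>}"
  and sorted: "\<And>i j. i \<le> j \<Longrightarrow> j < N \<Longrightarrow> lam j \<le> lam i"
  and a_nonneg: "\<And>i j. i<N \<Longrightarrow> j<N \<Longrightarrow> 0 \<le> a i j"
  and N2: "2 \<le> N"
  and psdK: "\<And>x. 0 \<le> \<theta> * (\<Sum>i<N. x i * x i) - (\<Sum>i<N. x i * (\<Sum>j<N. a i j * x j)) + s' * (\<Sum>i<N. x i)^2"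
  and zex: "\<exists>z. (\<exists>i<N. z i \<noteq> 0) \<and> (\<Sum>i<N. z i) = 0 \<and>
      \<theta> * (\<Sum>i<N. z i * z i) - (\<Sum>i<N. z i * (\<Sum>j<N. a i j * z j)) = 0"
begin

definition Kf :: "(nat \<Rightarrow> real) \<Rightarrow> real" where
  "Kf x = \<theta> * dot x x - dot x (Ax x) + s' * (sumN x)^2"

lemma Kf_nonneg: "Kf x \<ge> 0"
  using psdK[of x] unfolding Kf_def dot_def Ax_def sumN_def by simp

lemma K_kernel:
  assumes "Kf x = 0" "sumN x = 0"
  shows "\<forall>i<N. Ax x i = \<theta> * x i"
proof -
  define B where "B i j = (if i = j then \<theta> else 0) - a i j + s'" for i j
  have sym: "\<And>i j. i < N \<Longrightarrow> j < N \<Longrightarrow> B i j = B j i" unfolding B_def using a_sym by auto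
  have psd: "\<And>y. (\<Sum>i<N. \<Sum>j<N. y i * B i j * y j) \<ge> 0"
    unfolding B_def form_eq using Kf_nonneg unfolding Kf_def by simp
  have z: "(\<Sum>i<N. \<Sum>j<N. x i * B i j * x j) = 0"
    unfolding B_def form_eq using assms unfolding Kf_def by simp
  have "\<forall>i<N. (\<Sum>j<N. B i j * x j) = 0" by (rule psd_zero[OF sym psd z])
  moreover have "(\<Sum>j<N. B i j * x j) = \<theta> * x i - Ax x i + s' * sumN x" if "i<N" for i
  proof -
    have "(\<Sum>j<N. B i j * x j) = (\<Sum>j<N. (if i = j then \<theta> * x j else 0) - a i j * x j + s' * x j)"
      unfolding B_def by (rule sum.cong) (auto simp: algebra_simps)
    also have "\<dots> = (\<Sum>j<N. (if i = j then \<theta> * x j else 0)) - (\<Sum>j<N. a i j * x j) + s' * (\<Sum>j<N. x j)"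
      by (simp add: sum.distrib sum_subtractf sum_distrib_left)
    also have "(\<Sum>j<N. (if i = j then \<theta> * x j else 0)) = \<theta> * x i" using that by simp
    finally show ?thesis unfolding Ax_def sumN_def by simp
  qed
  ultimately show ?thesis using assms(2) by simp
qed

lemma K_le: assumes "sumN x = 0" shows "dot x (Ax x) \<le> \<theta> * dot x x"
  using Kf_nonneg[of x] assms unfolding Kf_def by simp

lemma Kf_eig: assumes "sumN x = 0" "\<forall>i<N. Ax x i = \<theta> * x i" shows "Kf x = 0"
proof -
  have "dot x (Ax x) = \<theta> * dot x x"
    unfolding dot_def using assms(2) by (simp add: sum_distrib_left mult_ac)
  then show ?thesis unfolding Kf_def using assms(1) by simp
qed

lemma z_exists: obtains z where "\<exists>i<N. z i \<noteq> 0" "sumN z = 0" "\<forall>i<N. Ax z i = \<theta> * z i"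
proof -
  from zex obtain z where z: "\<exists>i<N. z i \<noteq> 0" "sumN z = 0" "\<theta> * dot z z - dot z (Ax z) = 0"
    unfolding sumN_def dot_def Ax_def by blast
  then have "Kf z = 0" unfolding Kf_def by simp
  then show ?thesis using that z K_kernel by blast
qed

lemma card_ex: assumes "card {i. i<N \<and> P i} \<noteq> 0" shows "\<exists>i<N. P i"
proof (rule ccontr)
  assume "\<not> ?thesis"
  then have "{i. i<N \<and> P i} = {}" by auto
  then show False using assms by simp
qed

lemma dd_ex: assumes "i<N" shows "\<exists>k<N. dd k = lam i"
proof -
  have "card {j. j<N \<and> lam j = lam i} \<noteq> 0" using assms by (auto simp: card_eq_0_iff)
  then show ?thesis using card_ex[of "\<lambda>k. dd k = lam i"] cnt by simp
qed

lemma lam_ex: assumes "k<N" shows "\<exists>i<N. lam i = dd k"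
proof -
  have "card {j. j<N \<and> dd j = dd k} \<noteq> 0" using assms by (auto simp: card_eq_0_iff)
  then show ?thesis using card_ex[of "\<lambda>i. lam i = dd k"] cnt by simp
qed

lemma dd_le_lam0: assumes "k<N" shows "dd k \<le> lam 0"
proof -
  obtain i where "i<N" "lam i = dd k" using lam_ex[OF assms] by blast
  then show ?thesis using sorted[of 0 i] by simp
qed

lemma theta_ev: "\<exists>k<N. dd k = \<theta>"
proof -
  obtain z where z: "\<exists>i<N. z i \<noteq> 0" "sumN z = 0" "\<forall>i<N. Ax z i = \<theta> * z i" by (rule z_exists)
  have "\<exists>k<N. coef z k \<noteq> 0"
  proof (rule ccontr)
    assume "\<not> ?thesis"
    then have "\<forall>i<N. z i = 0" using coef_zero by blast
    then show False using z by auto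
  qed
  then obtain k where "k<N" "coef z k \<noteq> 0" by blast
  then show ?thesis using eigvec_coef[OF z(3)] by blast
qed

lemma lam1_le: "lam 1 \<le> \<theta>"
proof (rule ccontr)
  assume "\<not> lam 1 \<le> \<theta>"
  then have l1: "lam 1 > \<theta>" by simp
  have l01: "lam 0 \<ge> lam 1" using sorted N2 by simp
  obtain i j where ij: "i<N" "j<N" "i \<noteq> j" "dd i > \<theta>" "dd j > \<theta>"
  proof (cases "lam 0 = lam 1")
    case True
    have "card {k. k<N \<and> lam k = lam 1} \<ge> 2"
    proof -
      have "{0,1} \<subseteq> {k. k<N \<and> lam k = lam 1}" using True N2 by auto
      then have "card {0::nat,1} \<le> card {k. k<N \<and> lam k = lam 1}" by (rule card_mono[rotated]) auto
      then show ?thesis by simp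
    qed
    then have c2: "card {k. k<N \<and> dd k = lam 1} \<ge> 2" using cnt by simp
    define S where "S = {k. k<N \<and> dd k = lam 1}"
    have fS: "finite S" unfolding S_def by auto
    have "S \<noteq> {}" using c2 unfolding S_def by (metis card.empty not_numeral_le_zero)
    then obtain i where i: "i \<in> S" by blast
    have "card (S - {i}) \<ge> 1" using c2 i fS unfolding S_def[symmetric] by (simp add: card_Diff_singleton)
    then have "S - {i} \<noteq> {}" by (metis card.empty not_one_le_zero)
    then obtain j where j: "j \<in> S - {i}" by blast
    show ?thesis
    proof (rule that[of i j])
      show "i<N" "j<N" "i \<noteq> j" using i j unfolding S_def by auto
      show "dd i > \<theta>" "dd j > \<theta>" using i j l1 unfolding S_def by auto
    qed
  next
    case False
    obtain i where i: "i<N" "dd i = lam 0" using dd_ex[of 0] N2 by auto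
    obtain j where j: "j<N" "dd j = lam 1" using dd_ex[of 1] N2 by auto
    show ?thesis
    proof (rule that[of i j])
      show "i<N" "j<N" using i j by auto
      show "i \<noteq> j" using i j False by auto
      show "dd i > \<theta>" using i l1 l01 by simp
      show "dd j > \<theta>" using j l1 by simp
    qed
  qed
  define \<alpha> \<beta> where "\<alpha> = (if sumN (V i) = 0 \<and> sumN (V j) = 0 then 1 else sumN (V j))"
    and "\<beta> = (if sumN (V i) = 0 \<and> sumN (V j) = 0 then 0 else - sumN (V i))"
  define x where "x k = \<alpha> * V i k + \<beta> * V j k" for k
  have "sumN x = \<alpha> * sumN (V i) + \<beta> * sumN (V j)"
    unfolding x_def sumN_def by (simp add: sum.distrib sum_distrib_left)
  then have sx: "sumN x = 0" unfolding \<alpha>_def \<beta>_def by (auto simp: mult.commute)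
  have cx: "coef x k = \<alpha> * (if k = i then 1 else 0) + \<beta> * (if k = j then 1 else 0)" if "k<N" for k
    unfolding x_def coef_lin using coef_V that ij by simp
  have ab: "\<alpha> \<noteq> 0 \<or> \<beta> \<noteq> 0" unfolding \<alpha>_def \<beta>_def by auto
  have "dot x (Ax x) > \<theta> * dot x x"
  proof (cases "\<alpha> \<noteq> 0")
    case True
    show ?thesis
    proof (rule strict[of x \<theta> i])
      show "\<forall>k<N. coef x k \<noteq> 0 \<longrightarrow> \<theta> \<le> dd k" using cx ij by (auto split: if_splits)
    qed (use cx ij True in auto)
  next
    case False
    then have "\<beta> \<noteq> 0" using ab by simp
    show ?thesis
    proof (rule strict[of x \<theta> j])
      show "\<forall>k<N. coef x k \<noteq> 0 \<longrightarrow> \<theta> \<le> dd k" using cx ij by (auto split: if_splits)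
    qed (use cx ij \<open>\<beta> \<noteq> 0\<close> in auto)
  qed
  then show False using K_le[OF sx] by simp
qed

end

context spec begin

lemma coef_sum: "coef (\<lambda>i. \<Sum>t\<in>J. f t i) k = (\<Sum>t\<in>J. coef (f t) k)"
  unfolding coef_def by (simp add: sum_distrib_left) (rule sum.swap)

lemma Ax_lin: "Ax (\<lambda>i. s * x i + t * y i) i = s * Ax x i + t * Ax y i"
  unfolding Ax_def by (simp add: algebra_simps sum.distrib sum_distrib_left)

lemma sumN_lin: "sumN (\<lambda>i. s * x i + t * y i) = s * sumN x + t * sumN y"
  unfolding sumN_def by (simp add: algebra_simps sum.distrib sum_distrib_left)

end

context core begin

lemma eig_dot: assumes "\<forall>i<N. Ax x i = \<theta> * x i" shows "dot x (Ax x) = \<theta> * dot x x"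
  unfolding dot_def using assms by (simp add: sum_distrib_left mult_ac)

lemma perron:
  assumes "\<forall>k<N. dd k \<le> \<theta>"
  shows "\<exists>j0<N. dd j0 = \<theta> \<and> sumN (V j0) \<noteq> 0"
proof -
  obtain z where z: "\<exists>i<N. z i \<noteq> 0" "sumN z = 0" "\<forall>i<N. Ax z i = \<theta> * z i" by (rule z_exists)
  define w where "w i = \<bar>z i\<bar>" for i
  have 1: "dot z (Ax z) = \<theta> * dot z z" by (rule eig_dot[OF z(3)])
  have 2: "dot w w = dot z z" unfolding dot_def w_def by (simp add: abs_mult_self_eq)
  have 3: "dot z (Ax z) \<le> dot w (Ax w)"
    unfolding dot_def Ax_def w_def sum_distrib_left
  proof (rule sum_mono, rule sum_mono)
    fix i j assume "i \<in> {..<N}" "j \<in> {..<N}"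
    then have a0: "a i j \<ge> 0" using a_nonneg by auto
    have "z i * z j \<le> \<bar>z i\<bar> * \<bar>z j\<bar>" by (metis abs_ge_self abs_mult)
    then have "a i j * (z i * z j) \<le> a i j * (\<bar>z i\<bar> * \<bar>z j\<bar>)" using a0 by (rule mult_left_mono)
    then show "z i * (a i j * z j) \<le> \<bar>z i\<bar> * (a i j * \<bar>z j\<bar>)"
      by (simp add: mult_ac)
  qed
  have 4: "dot w (Ax w) \<le> \<theta> * dot w w" by (rule rayleigh[OF assms])
  have zero: "(\<Sum>i<N. \<Sum>j<N. w i * ((if i = j then \<theta> else 0) - a i j + 0) * w j) = 0"
    unfolding form_eq using 1 2 3 4 by simp
  have symB: "\<And>i j. i < N \<Longrightarrow> j < N \<Longrightarrow> (if i = j then \<theta> else 0) - a i j + 0 = (if j = i then \<theta> else 0) - a j i + 0"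
    using a_sym by auto
  have psdB: "\<And>y. (\<Sum>i<N. \<Sum>j<N. y i * ((if i = j then \<theta> else 0) - a i j + 0) * y j) \<ge> 0"
    unfolding form_eq using rayleigh[OF assms] by simp
  have ker: "\<forall>i<N. (\<Sum>j<N. ((if i = j then \<theta> else 0) - a i j + 0) * w j) = 0"
    by (rule psd_zero[OF symB psdB zero])
  have ew: "\<forall>i<N. Ax w i = \<theta> * w i"
  proof (intro allI impI)
    fix i assume i: "i<N"
    have "(\<Sum>j<N. ((if i = j then \<theta> else 0) - a i j + 0) * w j) = (\<Sum>j<N. (if i = j then \<theta> * w j else 0) - a i j * w j)"
      by (rule sum.cong) (auto simp: algebra_simps)
    also have "\<dots> = \<theta> * w i - Ax w i" using i unfolding Ax_def by (simp add: sum_subtractf)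
    finally show "Ax w i = \<theta> * w i" using ker i by simp
  qed
  have spos: "sumN w > 0"
  proof -
    obtain i where i: "i<N" "z i \<noteq> 0" using z(1) by blast
    have "sumN w = w i + (\<Sum>j\<in>{..<N} - {i}. w j)" unfolding sumN_def using i by (simp add: sum.remove)
    moreover have "(\<Sum>j\<in>{..<N} - {i}. w j) \<ge> 0" unfolding w_def by (rule sum_nonneg) simp
    moreover have "w i > 0" unfolding w_def using i by simp
    ultimately show ?thesis by linarith
  qed
  show ?thesis
  proof (rule ccontr)
    assume nt: "\<not> ?thesis"
    have "(\<Sum>k<N. coef w k * sumN (V k)) = 0"
    proof (rule sum.neutral, rule ballI)
      fix k assume k: "k \<in> {..<N}"
      show "coef w k * sumN (V k) = 0"
      proof (cases "dd k = \<theta>")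
        case True then show ?thesis using nt k by auto
      next
        case False then show ?thesis using eigvec_coef[OF ew, of k] k by simp
      qed
    qed
    then have "sumN w = 0" using sumN_expand[of w] by simp
    then show False using spos by simp
  qed
qed

lemma lam1_eq: "lam 1 = \<theta>"
proof -
  obtain k where k: "k<N" "dd k = \<theta>" using theta_ev by blast
  obtain i where i: "i<N" "lam i = \<theta>" using lam_ex[OF k(1)] k by auto
  show ?thesis
  proof (cases "i = 0")
    case False
    then have "lam i \<le> lam 1" using sorted[of 1 i] i by simp
    then show ?thesis using lam1_le i by simp
  next
    case True
    show ?thesis
    proof (rule ccontr)
      assume ne: "lam 1 \<noteq> \<theta>"
      then have lt: "lam 1 < \<theta>" using lam1_le by simp
      have l0: "lam 0 = \<theta>" using True i by simp
      have mx: "\<forall>k<N. dd k \<le> \<theta>" using dd_le_lam0 l0 by simp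
      obtain j0 where j0: "j0<N" "dd j0 = \<theta>" "sumN (V j0) \<noteq> 0" using perron[OF mx] by blast
      have "{i. i<N \<and> lam i = \<theta>} = {0}"
      proof (intro equalityI subsetI)
        fix x assume "x \<in> {i. i<N \<and> lam i = \<theta>}"
        then have x: "x<N" "lam x = \<theta>" by auto
        show "x \<in> {0}"
        proof (rule ccontr)
          assume "x \<notin> {0}"
          then have "lam x \<le> lam 1" using sorted[of 1 x] x by simp
          then show False using x lt by simp
        qed
      qed (use l0 N2 in auto)
      then have "card {k. k<N \<and> dd k = \<theta>} = 1" using cnt by simp
      then obtain j where jj: "{k. k<N \<and> dd k = \<theta>} = {j}" by (rule card_1_singletonE)
      have T: "k = j0" if "k<N" "dd k = \<theta>" for k
      proof -
        have "k \<in> {j}" "j0 \<in> {j}" using that j0 jj by blast+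
        then show ?thesis by simp
      qed
      obtain z where z: "\<exists>i<N. z i \<noteq> 0" "sumN z = 0" "\<forall>i<N. Ax z i = \<theta> * z i" by (rule z_exists)
      have cz: "coef z k = 0" if "k<N" "k \<noteq> j0" for k
      proof -
        have "dd k \<noteq> \<theta>" using T that by metis
        then show ?thesis using eigvec_coef[OF z(3), of k] that by simp
      qed
      have "sumN z = (\<Sum>k<N. coef z k * sumN (V k))" by (rule sumN_expand)
      also have "\<dots> = (\<Sum>k<N. if k = j0 then coef z j0 * sumN (V j0) else 0)"
        by (rule sum.cong[OF refl]) (use cz in auto)
      also have "\<dots> = coef z j0 * sumN (V j0)" using j0 by simp
      finally have "coef z j0 = 0" using z(2) j0 by simp
      then have "\<forall>k<N. coef z k = 0" using cz by metis
      then have "\<forall>i<N. z i = 0" using coef_zero by blast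
      then show False using z(1) by blast
    qed
  qed
qed

lemma lam0_ge: "lam 0 \<ge> \<theta>"
  using sorted[of 0 1] N2 lam1_eq by simp

lemma orth_u:
  assumes "lam 0 \<noteq> \<theta>" "t<N" "dd t = \<theta>"
  shows "sumN (V t) = 0"
proof (rule ccontr)
  assume nz: "sumN (V t) \<noteq> 0"
  have gt: "lam 0 > \<theta>" using lam0_ge assms by simp
  obtain s where s: "s<N" "dd s = lam 0" using dd_ex[of 0] N2 by auto
  have st: "s \<noteq> t" using s assms gt by auto
  define \<beta> where "\<beta> = - sumN (V s) / sumN (V t)"
  define x where "x i = 1 * V s i + \<beta> * V t i" for i
  have sx: "sumN x = 0" unfolding x_def sumN_lin \<beta>_def using nz by simp
  have cx: "coef x k = (if k = s then 1 else 0) + \<beta> * (if k = t then 1 else 0)" if "k<N" for k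
    unfolding x_def coef_lin using coef_V that s assms by simp
  have "dot x (Ax x) > \<theta> * dot x x"
  proof (rule strict[of x \<theta> s])
    show "\<forall>k<N. coef x k \<noteq> 0 \<longrightarrow> \<theta> \<le> dd k" using cx s assms gt by (auto split: if_splits)
  qed (use cx s st gt in auto)
  then show False using K_le[OF sx] by simp
qed

definition mult' where "mult' = card {i. 1 \<le> i \<and> i < N \<and> lam i = lam 1}"
definition m\<theta> where "m\<theta> = card {k. k<N \<and> dd k = \<theta>}"

lemma mult_eq: "mult' = (if lam 0 = \<theta> then m\<theta> - 1 else m\<theta>)"
proof -
  have S: "{i. 1 \<le> i \<and> i < N \<and> lam i = lam 1} = {i. i<N \<and> lam i = \<theta>} - {0}"
    using lam1_eq by auto
  show ?thesis
  proof (cases "lam 0 = \<theta>")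
    case True
    then have "0 \<in> {i. i<N \<and> lam i = \<theta>}" using N2 by auto
    then show ?thesis unfolding mult'_def m\<theta>_def S cnt using True by (simp add: card_Diff_singleton)
  next
    case False
    then have "{i. i<N \<and> lam i = \<theta>} - {0} = {i. i<N \<and> lam i = \<theta>}" by auto
    then show ?thesis unfolding mult'_def m\<theta>_def S cnt using False by simp
  qed
qed

end

context core begin

lemma dot_pos_ex: assumes "\<exists>i<N. x i \<noteq> 0" shows "dot x x > 0"
  using assms dot_self_pos by blast

lemma forward:
  fixes L :: "nat \<Rightarrow> nat \<Rightarrow> real"
  assumes n: "n + 2 \<le> N"
    and F: "\<And>x. sumN x = 0 \<Longrightarrow> \<theta>' * dot x x - dot x (Ax x) \<ge> 0"
    and Z: "\<And>x. sumN x = 0 \<Longrightarrow> (\<forall>k<n. (\<Sum>i<N. L k i * x i) = 0) \<Longrightarrow> \<theta>' * dot x x - dot x (Ax x) = 0"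
  shows "N - 1 - n \<le> mult'"
proof -
  obtain z where z: "\<exists>i<N. z i \<noteq> 0" "sumN z = 0" "\<forall>i<N. Ax z i = \<theta> * z i" by (rule z_exists)
  have ge: "\<theta>' \<ge> \<theta>"
  proof -
    have "\<theta>' * dot z z - \<theta> * dot z z \<ge> 0" using F[OF z(2)] eig_dot[OF z(3)] by simp
    then have "(\<theta>' - \<theta>) * dot z z \<ge> 0" by (simp add: algebra_simps)
    moreover have "dot z z > 0" by (rule dot_pos_ex[OF z(1)])
    ultimately show ?thesis by (simp add: zero_le_mult_iff)
  qed
  define Lr where "Lr r i = (if r = 0 then 1 else L (r - 1) i)" for r i
  have "card {..<n+1} < card {..<N}" using n by simp
  from exists_nonzero_solution_set[OF _ _ this, of Lr]
  obtain x0 where x0: "\<exists>j\<in>{..<N}. x0 j \<noteq> 0" "\<forall>r\<in>{..<n+1}. (\<Sum>j<N. Lr r j * x0 j) = 0" by auto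
  have sx0: "sumN x0 = 0" using x0(2)[rule_format, of 0] unfolding sumN_def Lr_def by simp
  have Lx0: "\<forall>k<n. (\<Sum>i<N. L k i * x0 i) = 0"
  proof (intro allI impI)
    fix k assume "k<n"
    then show "(\<Sum>i<N. L k i * x0 i) = 0" using x0(2)[rule_format, of "Suc k"] unfolding Lr_def by simp
  qed
  have le: "\<theta>' \<le> \<theta>"
  proof -
    have "\<theta>' * dot x0 x0 = dot x0 (Ax x0)" using Z[OF sx0 Lx0] by simp
    also have "\<dots> \<le> \<theta> * dot x0 x0" by (rule K_le[OF sx0])
    finally have "(\<theta>' - \<theta>) * dot x0 x0 \<le> 0" by (simp add: algebra_simps)
    moreover have "dot x0 x0 > 0" using x0(1) dot_pos_ex by auto
    ultimately show ?thesis by (simp add: mult_le_0_iff)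
  qed
  have th: "\<theta>' = \<theta>" using ge le by simp
  have eigX: "\<forall>i<N. Ax x i = \<theta> * x i" if "sumN x = 0" "\<forall>k<n. (\<Sum>i<N. L k i * x i) = 0" for x
  proof -
    have "Kf x = 0" using Z[OF that] th that(1) unfolding Kf_def by simp
    then show ?thesis using K_kernel that(1) by blast
  qed
  show ?thesis
  proof (rule ccontr)
    assume "\<not> N - 1 - n \<le> mult'"
    then have small: "mult' + n + 1 < N" by simp
    define T where "T = {k. k<N \<and> dd k = \<theta>}"
    obtain Jq j0 where Jq: "Jq \<subseteq> T" "card Jq = mult'" "j0 < N"
      and rest: "\<And>k. k \<in> T \<Longrightarrow> k \<notin> Jq \<Longrightarrow> k = j0 \<and> lam 0 = \<theta>" and sj0: "lam 0 = \<theta> \<Longrightarrow> sumN (V j0) \<noteq> 0"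
    proof (cases "lam 0 = \<theta>")
      case True
      have mx: "\<forall>k<N. dd k \<le> \<theta>" using dd_le_lam0 True by simp
      obtain j0 where j0: "j0<N" "dd j0 = \<theta>" "sumN (V j0) \<noteq> 0" using perron[OF mx] by blast
      show ?thesis
      proof (rule that[of "T - {j0}" j0])
        show "T - {j0} \<subseteq> T" by auto
        have "j0 \<in> T" unfolding T_def using j0 by auto
        then show "card (T - {j0}) = mult'" unfolding mult_eq m\<theta>_def T_def using True
          by (simp add: card_Diff_singleton T_def)
      qed (use j0 True in auto)
    next
      case False
      show ?thesis
      proof (rule that[of T 0])
        show "card T = mult'" unfolding mult_eq m\<theta>_def T_def using False by simp
      qed (use False N2 in auto)
    qed
    have fJq: "finite Jq" using Jq(1) unfolding T_def by (auto intro: finite_subset)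
    define R where "R = {..<n+1} \<union> (\<lambda>t. n + 1 + t) ` Jq"
    define Lr where "Lr r i = (if r = 0 then 1 else if r \<le> n then L (r - 1) i else Qm (r - n - 1) i)" for r i
    have cR: "card R \<le> n + 1 + mult'"
    proof -
      have "card R \<le> card {..<n+1} + card ((\<lambda>t. n + 1 + t) ` Jq)" unfolding R_def by (rule card_Un_le)
      also have "card ((\<lambda>t. n + 1 + t) ` Jq) \<le> card Jq" by (rule card_image_le[OF fJq])
      finally show ?thesis using Jq(2) by simp
    qed
    have "card R < card {..<N}" using cR small by simp
    from exists_nonzero_solution_set[OF _ _ this, of Lr]
    obtain x where x: "\<exists>j\<in>{..<N}. x j \<noteq> 0" "\<forall>r\<in>R. (\<Sum>j<N. Lr r j * x j) = 0"
      unfolding R_def using fJq by auto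
    have "0 \<in> R" unfolding R_def by auto
    then have sx: "sumN x = 0" using x(2) unfolding Lr_def sumN_def by auto
    have Lx: "\<forall>k<n. (\<Sum>i<N. L k i * x i) = 0"
    proof (intro allI impI)
      fix k assume "k<n"
      then have "Suc k \<in> R" unfolding R_def by auto
      then have "(\<Sum>j<N. Lr (Suc k) j * x j) = 0" using x(2) by blast
      then show "(\<Sum>i<N. L k i * x i) = 0" using \<open>k<n\<close> unfolding Lr_def by simp
    qed
    have cJ: "coef x t = 0" if "t \<in> Jq" for t
    proof -
      have "n + 1 + t \<in> R" unfolding R_def using that by auto
      then have "(\<Sum>j<N. Lr (n + 1 + t) j * x j) = 0" using x(2) by blast
      then show ?thesis unfolding Lr_def coef_def by simp
    qed
    have ex: "\<forall>i<N. Ax x i = \<theta> * x i" by (rule eigX[OF sx Lx])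
    have c0: "coef x k = 0" if "k<N" "k \<noteq> j0 \<or> lam 0 \<noteq> \<theta>" for k
    proof (cases "dd k = \<theta>")
      case True
      then have "k \<in> T" unfolding T_def using that by auto
      then show ?thesis using cJ rest that by blast
    next
      case False
      then show ?thesis using eigvec_coef[OF ex that(1)] by simp
    qed
    have call: "\<forall>k<N. coef x k = 0"
    proof (cases "lam 0 = \<theta>")
      case False then show ?thesis using c0 by blast
    next
      case True
      have "sumN x = (\<Sum>k<N. coef x k * sumN (V k))" by (rule sumN_expand)
      also have "\<dots> = (\<Sum>k<N. if k = j0 then coef x j0 * sumN (V j0) else 0)"
        by (rule sum.cong[OF refl]) (use c0 in auto)
      also have "\<dots> = coef x j0 * sumN (V j0)" using Jq(3) by simp
      finally have "coef x j0 = 0" using sx sj0[OF True] by simp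
      then show ?thesis using c0 by metis
    qed
    then have "\<forall>i<N. x i = 0" using coef_zero by blast
    then show False using x(1) by auto
  qed
qed

lemma backward:
  obtains J :: "nat set" and X :: "nat \<Rightarrow> nat \<Rightarrow> real" where "finite J" "card J = mult'" "\<And>t. t\<in>J \<Longrightarrow> sumN (X t) = 0" "\<And>t. t\<in>J \<Longrightarrow> Kf (X t) = 0"
    "\<And>\<beta>. (\<forall>i<N. (\<Sum>t\<in>J. \<beta> t * X t i) = 0) \<Longrightarrow> (\<forall>t\<in>J. \<beta> t = 0)"
proof (cases "lam 0 = \<theta>")
  case False
  define T where "T = {k. k<N \<and> dd k = \<theta>}"
  show ?thesis
  proof (rule that[of T V])
    show "finite T" unfolding T_def by auto
    show "card T = mult'" unfolding mult_eq m\<theta>_def T_def using False by simp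
    fix t assume t: "t \<in> T"
    then show s0: "sumN (V t) = 0" using orth_u[OF False] unfolding T_def by auto
    have "\<forall>i<N. Ax (V t) i = \<theta> * V t i" using Ax_V t unfolding T_def by auto
    then show "Kf (V t) = 0" by (rule Kf_eig[OF s0])
  next
    fix \<beta> assume b: "\<forall>i<N. (\<Sum>t\<in>T. \<beta> t * V t i) = 0"
    show "\<forall>t\<in>T. \<beta> t = 0"
    proof
      fix k assume k: "k \<in> T"
      have "coef (\<lambda>i. \<Sum>t\<in>T. \<beta> t * V t i) k = \<beta> k"
        by (subst coef_comb) (use k in \<open>auto simp: T_def\<close>)
      moreover have eq0: "coef (\<lambda>i. \<Sum>t\<in>T. \<beta> t * V t i) = coef (\<lambda>i. 0)" by (rule coef_cong) (use b in auto)
      have "coef (\<lambda>i. \<Sum>t\<in>T. \<beta> t * V t i) k = 0" using fun_cong[OF eq0, of k] unfolding coef_def by simp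
      ultimately show "\<beta> k = 0" by simp
    qed
  qed
next
  case True
  have mx: "\<forall>k<N. dd k \<le> \<theta>" using dd_le_lam0 True by simp
  obtain j0 where j0: "j0<N" "dd j0 = \<theta>" "sumN (V j0) \<noteq> 0" using perron[OF mx] by blast
  define T where "T = {k. k<N \<and> dd k = \<theta>} - {j0}"
  define X where "X t i = 1 * V t i + (- (sumN (V t) / sumN (V j0))) * V j0 i" for t i
  show ?thesis
  proof (rule that[of T X])
    show "finite T" unfolding T_def by auto
    have "j0 \<in> {k. k<N \<and> dd k = \<theta>}" using j0 by auto
    then show "card T = mult'" unfolding mult_eq m\<theta>_def T_def using True by (simp add: card_Diff_singleton)
    fix t assume t: "t \<in> T"
    show s0: "sumN (X t) = 0" unfolding X_def[abs_def] sumN_lin using j0 by simp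
    have "\<forall>i<N. Ax (X t) i = \<theta> * X t i"
    proof (intro allI impI)
      fix i assume "i<N"
      then show "Ax (X t) i = \<theta> * X t i"
        unfolding X_def[abs_def] Ax_lin using Ax_V t j0 unfolding T_def by (simp add: algebra_simps)
    qed
    then show "Kf (X t) = 0" by (rule Kf_eig[OF s0])
  next
    fix \<beta> assume b: "\<forall>i<N. (\<Sum>t\<in>T. \<beta> t * X t i) = 0"
    show "\<forall>t\<in>T. \<beta> t = 0"
    proof
      fix k assume k: "k \<in> T"
      have kN: "k<N" "k \<noteq> j0" using k unfolding T_def by auto
      have "coef (\<lambda>i. \<Sum>t\<in>T. \<beta> t * X t i) k = (\<Sum>t\<in>T. coef (\<lambda>i. \<beta> t * X t i) k)" by (rule coef_sum)
      also have "\<dots> = (\<Sum>t\<in>T. \<beta> t * (if k = t then 1 else 0))"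
      proof (rule sum.cong[OF refl])
        fix t assume t: "t \<in> T"
        have "coef (\<lambda>i. \<beta> t * X t i) k = \<beta> t * coef (X t) k"
          using coef_lin[of "\<beta> t" "X t" 0 "X t" k] by simp
        also have "coef (X t) k = coef (V t) k + (- (sumN (V t) / sumN (V j0))) * coef (V j0) k"
          unfolding X_def[abs_def] coef_lin by simp
        also have "\<dots> = (if k = t then 1 else 0)" using coef_V kN t j0 unfolding T_def by auto
        finally show "coef (\<lambda>i. \<beta> t * X t i) k = \<beta> t * (if k = t then 1 else 0)" .
      qed
      also have "\<dots> = \<beta> k" using k unfolding T_def by (simp add: if_distrib cong: if_cong)
      finally have "coef (\<lambda>i. \<Sum>t\<in>T. \<beta> t * X t i) k = \<beta> k" .
      moreover have eq0: "coef (\<lambda>i. \<Sum>t\<in>T. \<beta> t * X t i) = coef (\<lambda>i. 0)" by (rule coef_cong) (use b in auto)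
      have "coef (\<lambda>i. \<Sum>t\<in>T. \<beta> t * X t i) k = 0" using fun_cong[OF eq0, of k] unfolding coef_def by simp
      ultimately show "\<beta> k = 0" by simp
    qed
  qed
qed

end

definition ip :: "nat \<Rightarrow> (nat \<Rightarrow> real) \<Rightarrow> (nat \<Rightarrow> real) \<Rightarrow> real" where
  "ip m x y = (\<Sum>k<m. x k * y k)"

definition orthonormal :: "nat \<Rightarrow> nat \<Rightarrow> (nat \<Rightarrow> nat \<Rightarrow> real) \<Rightarrow> bool" where
  "orthonormal m r e \<longleftrightarrow> (\<forall>s<r. \<forall>t<r. ip m (e s) (e t) = (if s = t then 1 else 0))"

definition in_span :: "nat \<Rightarrow> nat \<Rightarrow> (nat \<Rightarrow> nat \<Rightarrow> real) \<Rightarrow> (nat \<Rightarrow> real) \<Rightarrow> (nat \<Rightarrow> real) \<Rightarrow> bool" where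
  "in_span m r e \<beta> x \<longleftrightarrow> (\<forall>k<m. x k = (\<Sum>s<r. \<beta> s * e s k))"

lemma ip_sym: "ip m x y = ip m y x"
  unfolding ip_def by (simp add: mult.commute)

lemma ip_comb_left: "ip m (\<lambda>k. \<Sum>s\<in>S. \<beta> s * e s k) y = (\<Sum>s\<in>S. \<beta> s * ip m (e s) y)"
  unfolding ip_def by (simp add: sum_distrib_right sum_distrib_left mult_ac) (rule sum.swap)

lemma ip_cong: "(\<And>k. k<m \<Longrightarrow> x k = x' k) \<Longrightarrow> (\<And>k. k<m \<Longrightarrow> y k = y' k) \<Longrightarrow> ip m x y = ip m x' y'"
  unfolding ip_def by (auto intro!: sum.cong)

lemma span_coef:
  assumes "orthonormal m r e" "in_span m r e \<beta> x" "t<r"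
  shows "ip m x (e t) = \<beta> t"
proof -
  have "ip m x (e t) = ip m (\<lambda>k. \<Sum>s<r. \<beta> s * e s k) (e t)"
    by (rule ip_cong) (use assms(2) in \<open>auto simp: in_span_def\<close>)
  also have "\<dots> = (\<Sum>s<r. \<beta> s * ip m (e s) (e t))" by (rule ip_comb_left)
  also have "\<dots> = (\<Sum>s<r. if s = t then \<beta> t else 0)"
    by (rule sum.cong[OF refl]) (use assms(1,3) in \<open>auto simp: orthonormal_def\<close>)
  also have "\<dots> = \<beta> t" using assms(3) by simp
  finally show ?thesis .
qed

lemma span_norm:
  assumes "orthonormal m r e" "in_span m r e \<beta> x"
  shows "ip m x x = (\<Sum>s<r. \<beta> s * \<beta> s)"
proof -
  have "ip m x x = ip m (\<lambda>k. \<Sum>s<r. \<beta> s * e s k) x"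
    by (rule ip_cong) (use assms(2) in \<open>auto simp: in_span_def\<close>)
  also have "\<dots> = (\<Sum>s<r. \<beta> s * ip m (e s) x)" by (rule ip_comb_left)
  also have "\<dots> = (\<Sum>s<r. \<beta> s * \<beta> s)"
    by (rule sum.cong[OF refl]) (use span_coef[OF assms] in \<open>auto simp: ip_sym\<close>)
  finally show ?thesis .
qed

lemma span_orth:
  assumes "in_span m r e \<beta> x" "\<forall>s<r. ip m (e s) y = 0"
  shows "ip m x y = 0"
proof -
  have "ip m x y = ip m (\<lambda>k. \<Sum>s<r. \<beta> s * e s k) y"
    by (rule ip_cong) (use assms(1) in \<open>auto simp: in_span_def\<close>)
  also have "\<dots> = (\<Sum>s<r. \<beta> s * ip m (e s) y)" by (rule ip_comb_left)
  also have "\<dots> = 0" using assms(2) by simp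
  finally show ?thesis .
qed

lemma ip_self_nonneg: "ip m x x \<ge> 0"
  unfolding ip_def by (rule sum_nonneg) simp

lemma ip_self_zero: "ip m x x = 0 \<Longrightarrow> k<m \<Longrightarrow> x k = 0"
  unfolding ip_def using sum_nonneg_eq_0_iff[of "{..<m}" "\<lambda>k. x k * x k"] by auto

lemma gram_schmidt_fun:
  fixes ws :: "nat \<Rightarrow> nat \<Rightarrow> real"
  shows "\<exists>r e \<gamma>. orthonormal m r e \<and> (\<forall>i<K. \<exists>\<beta>. in_span m r e \<beta> (ws i))
     \<and> (\<forall>s<r. \<forall>k<m. e s k = (\<Sum>i<K. \<gamma> s i * ws i k))"
proof (induction K)
  case 0
  show ?case by (rule exI[of _ 0]) (auto simp: orthonormal_def)
next
  case (Suc K)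
  then obtain r e \<gamma> where on: "orthonormal m r e" and sp: "\<forall>i<K. \<exists>\<beta>. in_span m r e \<beta> (ws i)"
    and ge: "\<forall>s<r. \<forall>k<m. e s k = (\<Sum>i<K. \<gamma> s i * ws i k)" by blast
  define w where "w = ws K"
  define b where "b s = ip m w (e s)" for s
  define z where "z k = w k - (\<Sum>s<r. b s * e s k)" for k
  have zorth: "ip m z (e t) = 0" if "t<r" for t
  proof -
    have "ip m z (e t) = ip m w (e t) - ip m (\<lambda>k. \<Sum>s<r. b s * e s k) (e t)"
      unfolding z_def ip_def by (simp add: left_diff_distrib sum_subtractf)
    also have "ip m (\<lambda>k. \<Sum>s<r. b s * e s k) (e t) = (\<Sum>s<r. b s * ip m (e s) (e t))"
      by (rule ip_comb_left)
    finally have "ip m z (e t) = ip m w (e t) - (\<Sum>s<r. b s * ip m (e s) (e t))" .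
    also have "(\<Sum>s<r. b s * ip m (e s) (e t)) = (\<Sum>s<r. if s = t then b t else 0)"
      by (rule sum.cong[OF refl]) (use on that in \<open>auto simp: orthonormal_def\<close>)
    also have "\<dots> = b t" using that by simp
    finally show ?thesis unfolding b_def by simp
  qed
  define \<gamma>0 where "\<gamma>0 s i = (if i < K then \<gamma> s i else 0)" for s i
  have ge0: "\<forall>s<r. \<forall>k<m. e s k = (\<Sum>i<Suc K. \<gamma>0 s i * ws i k)"
    using ge unfolding \<gamma>0_def by simp
  show ?case
  proof (cases "ip m z z = 0")
    case True
    have "in_span m r e b w" unfolding in_span_def
      using ip_self_zero[OF True] unfolding z_def by auto
    then have "\<forall>i<Suc K. \<exists>\<beta>. in_span m r e \<beta> (ws i)" using sp unfolding w_def by (metis less_Suc_eq)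
    then show ?thesis using on ge0 by blast
  next
    case False
    define nz where "nz = sqrt (ip m z z)"
    have nzp: "nz > 0" unfolding nz_def using False ip_self_nonneg[of m z] by simp
    have nz2: "nz * nz = ip m z z" unfolding nz_def using ip_self_nonneg[of m z] by simp
    define e' where "e' = e(r := (\<lambda>k. z k / nz))"
    have on': "orthonormal m (Suc r) e'"
      unfolding orthonormal_def
    proof (intro allI impI)
      fix s t assume s: "s < Suc r" and t: "t < Suc r"
      have rr: "ip m (e' r) (e' r) = 1"
        unfolding e'_def ip_def using nzp nz2 False by (simp add: sum_divide_distrib[symmetric] ip_def)
      have rs: "ip m (e' r) (e' u) = 0" if "u<r" for u
      proof -
        have "ip m (e' r) (e' u) = ip m z (e u) / nz" unfolding e'_def ip_def using that
          by (simp add: sum_divide_distrib)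
        then show ?thesis using zorth[OF that] by simp
      qed
      show "ip m (e' s) (e' t) = (if s = t then 1 else 0)"
      proof (cases "s = r")
        case True
        then show ?thesis using rr rs t by (cases "t = r") auto
      next
        case False
        then have sr: "s < r" using s by simp
        show ?thesis
        proof (cases "t = r")
          case True
          then show ?thesis using rs[OF sr] sr by (simp add: ip_sym)
        next
          case False
          then have "t<r" using t by simp
          then show ?thesis using on sr False \<open>s \<noteq> r\<close> unfolding orthonormal_def e'_def by auto
        qed
      qed
    qed
    have sp': "\<forall>i<Suc K. \<exists>\<beta>. in_span m (Suc r) e' \<beta> (ws i)"
    proof (intro allI impI)
      fix i assume i: "i < Suc K"
      show "\<exists>\<beta>. in_span m (Suc r) e' \<beta> (ws i)"
      proof (cases "i = K")
        case True
        define \<beta> where "\<beta> s = (if s < r then b s else nz)" for s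
        have "in_span m (Suc r) e' \<beta> (ws i)"
          unfolding in_span_def
        proof (intro allI impI)
          fix k assume "k<m"
          have "(\<Sum>s<Suc r. \<beta> s * e' s k) = (\<Sum>s<r. b s * e s k) + nz * (z k / nz)"
            unfolding \<beta>_def e'_def by simp
          also have "\<dots> = w k" using nzp unfolding z_def by simp
          finally show "ws i k = (\<Sum>s<Suc r. \<beta> s * e' s k)" unfolding w_def True by simp
        qed
        then show ?thesis by blast
      next
        case False
        then have "i < K" using i by simp
        then obtain \<beta> where b: "in_span m r e \<beta> (ws i)" using sp by blast
        define \<beta>' where "\<beta>' s = (if s < r then \<beta> s else 0)" for s
        have "in_span m (Suc r) e' \<beta>' (ws i)"
          using b unfolding in_span_def \<beta>'_def e'_def by simp
        then show ?thesis by blast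
      qed
    qed
    define \<gamma>' where "\<gamma>' s i = (if s < r then \<gamma>0 s i else
        (if i = K then 1 / nz else - (\<Sum>t<r. b t * \<gamma>0 t i) / nz))" for s i
    have ge': "\<forall>s<Suc r. \<forall>k<m. e' s k = (\<Sum>i<Suc K. \<gamma>' s i * ws i k)"
    proof (intro allI impI)
      fix s k assume s: "s < Suc r" and k: "k<m"
      show "e' s k = (\<Sum>i<Suc K. \<gamma>' s i * ws i k)"
      proof (cases "s < r")
        case True
        then show ?thesis using ge0 k unfolding e'_def \<gamma>'_def by simp
      next
        case False
        then have sr: "s = r" using s by simp
        have "(\<Sum>i<Suc K. \<gamma>' s i * ws i k) = (\<Sum>i<Suc K. ((if i = K then 1 else 0) - (\<Sum>t<r. b t * \<gamma>0 t i)) * ws i k) / nz"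
          unfolding \<gamma>'_def sr by (simp add: \<gamma>0_def add_divide_distrib sum_divide_distrib)
            (rule sum.cong[OF refl], simp add: sum_divide_distrib[symmetric])
        also have "(\<Sum>i<Suc K. ((if i = K then 1 else 0) - (\<Sum>t<r. b t * \<gamma>0 t i)) * ws i k)
            = w k - (\<Sum>t<r. b t * (\<Sum>i<Suc K. \<gamma>0 t i * ws i k))"
        proof -
          have 1: "(\<Sum>i<Suc K. ((if i = K then 1 else 0) - (\<Sum>t<r. b t * \<gamma>0 t i)) * ws i k)
              = (\<Sum>i<Suc K. (if i = K then 1 else 0) * ws i k) - (\<Sum>i<Suc K. (\<Sum>t<r. b t * \<gamma>0 t i) * ws i k)"
            by (simp add: left_diff_distrib sum_subtractf)
          have 2: "(\<Sum>i<Suc K. (if i = K then 1 else 0) * ws i k) = w k" unfolding w_def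
            by (simp add: if_distrib cong: if_cong)
          have 3: "(\<Sum>i<Suc K. (\<Sum>t<r. b t * \<gamma>0 t i) * ws i k) = (\<Sum>t<r. b t * (\<Sum>i<Suc K. \<gamma>0 t i * ws i k))"
            unfolding sum_distrib_right sum_distrib_left by (subst sum.swap) (simp add: mult.assoc del: sum.lessThan_Suc)
          show ?thesis using 1 2 3 by simp
        qed
        also have "(\<Sum>t<r. b t * (\<Sum>i<Suc K. \<gamma>0 t i * ws i k)) = (\<Sum>t<r. b t * e t k)"
          by (rule sum.cong[OF refl]) (use ge0 k in auto)
        finally show ?thesis unfolding e'_def sr z_def by simp
      qed
    qed
    show ?thesis using on' sp' ge' by blast
  qed
qed


lemma ip_add_self: "ip m (\<lambda>k. x k + y k) (\<lambda>k. x k + y k) = ip m x x + 2 * ip m x y + ip m y y"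
  unfolding ip_def by (simp add: algebra_simps sum.distrib sum_distrib_left)

lemma sum_comb_swap: "(\<Sum>i\<in>A. \<Sum>t\<in>J. b t * f t i) = (\<Sum>t\<in>J. b t * (\<Sum>i\<in>A. f t i :: real))"
  by (simp add: sum_distrib_left) (rule sum.swap)

lemma sum_comb_swap2: "(\<Sum>i\<in>A. (\<Sum>t\<in>J. b t * f t i) * g i) = (\<Sum>t\<in>J. b t * (\<Sum>i\<in>A. f t i * g i :: real))"
  by (simp add: sum_distrib_left sum_distrib_right mult.assoc) (rule sum.swap)

lemma sum_shift0: "(\<Sum>i<Suc K. f i) = f 0 + (\<Sum>i<K. f (Suc i))"
  by (rule sum.lessThan_Suc_shift)

lemma rank_bound:
  fixes p X :: "nat \<Rightarrow> nat \<Rightarrow> real" and e \<gamma> :: "nat \<Rightarrow> nat \<Rightarrow> real"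
  assumes on: "orthonormal m r e"
    and ge: "\<forall>s<r. \<forall>k<m. e s k = (\<Sum>i<K. \<gamma> s i * (p (Suc i) k - p 0 k))"
    and fJ: "finite J" and cJ: "Suc K \<le> card J + n + 1"
    and rel1: "\<And>t. t\<in>J \<Longrightarrow> (\<Sum>i<Suc K. X t i) = 0"
    and rel2: "\<And>t k. t\<in>J \<Longrightarrow> k<m \<Longrightarrow> (\<Sum>i<Suc K. X t i * p i k) = 0"
    and ind: "\<And>\<beta>. (\<forall>i<Suc K. (\<Sum>t\<in>J. \<beta> t * X t i) = 0) \<Longrightarrow> (\<forall>t\<in>J. \<beta> t = 0)"
  shows "r \<le> n"
proof (rule ccontr)
  assume "\<not> r \<le> n"
  then have rn: "n < r" by simp
  define U where "U = Inl ` J \<union> Inr ` {..<r}"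
  have fU: "finite U" unfolding U_def using fJ by auto
  have cU: "card U = card J + r"
    unfolding U_def by (subst card_Un_disjoint) (use fJ in \<open>auto simp: card_image\<close>)
  define \<Gamma> where "\<Gamma> s i = (if i = 0 then - (\<Sum>i'<K. \<gamma> s i') else \<gamma> s (i - 1))" for s i
  define Lr :: "nat \<Rightarrow> nat + nat \<Rightarrow> real" where
    "Lr row u = (case u of Inl t \<Rightarrow> X t (Suc row) | Inr s \<Rightarrow> \<Gamma> s (Suc row))" for row u
  have "card {..<K} < card U" using cU cJ rn by simp
  from exists_nonzero_solution_set[OF _ fU this, of Lr]
  obtain y where y: "\<exists>u\<in>U. y u \<noteq> 0" "\<forall>row<K. (\<Sum>u\<in>U. Lr row u * y u) = 0" by auto
  define \<beta> where "\<beta> t = y (Inl t)" for t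
  define \<zeta> where "\<zeta> s = y (Inr s)" for s
  define Y where "Y i = (\<Sum>t\<in>J. \<beta> t * X t i) + (\<Sum>s<r. \<zeta> s * \<Gamma> s i)" for i
  have sumU: "(\<Sum>u\<in>U. Lr row u * y u) = Y (Suc row)" for row
  proof -
    have "(\<Sum>u\<in>U. Lr row u * y u) = (\<Sum>u\<in>Inl ` J. Lr row u * y u) + (\<Sum>u\<in>Inr ` {..<r}. Lr row u * y u)"
      unfolding U_def by (rule sum.union_disjoint) (use fJ in auto)
    also have "(\<Sum>u\<in>Inl ` J. Lr row u * y u) = (\<Sum>t\<in>J. \<beta> t * X t (Suc row))"
      by (subst sum.reindex) (auto simp: Lr_def \<beta>_def mult.commute)
    also have "(\<Sum>u\<in>Inr ` {..<r}. Lr row u * y u) = (\<Sum>s<r. \<zeta> s * \<Gamma> s (Suc row))"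
      by (subst sum.reindex) (auto simp: Lr_def \<zeta>_def mult.commute)
    finally show ?thesis unfolding Y_def .
  qed
  have YS: "Y (Suc row) = 0" if "row < K" for row using y(2) that sumU by simp
  have sG: "(\<Sum>i<Suc K. \<Gamma> s i) = 0" for s
    unfolding sum_shift0 \<Gamma>_def by simp
  have sY: "(\<Sum>i<Suc K. Y i) = 0"
  proof -
    have "(\<Sum>i<Suc K. Y i) = (\<Sum>t\<in>J. \<beta> t * (\<Sum>i<Suc K. X t i)) + (\<Sum>s<r. \<zeta> s * (\<Sum>i<Suc K. \<Gamma> s i))"
      unfolding Y_def sum.distrib sum_comb_swap ..
    also have "\<dots> = 0" using rel1 sG by simp
    finally show ?thesis .
  qed
  have Y0: "Y 0 = 0" using sY unfolding sum_shift0 using YS by simp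
  have Yall: "Y i = 0" if "i < Suc K" for i
    using that Y0 YS by (cases i) auto
  have Ge: "(\<Sum>i<Suc K. \<Gamma> s i * p i k) = e s k" if "s<r" "k<m" for s k
  proof -
    have "(\<Sum>i<Suc K. \<Gamma> s i * p i k) = - (\<Sum>i'<K. \<gamma> s i') * p 0 k + (\<Sum>i<K. \<gamma> s i * p (Suc i) k)"
      unfolding sum_shift0 \<Gamma>_def by simp
    also have "\<dots> = (\<Sum>i<K. \<gamma> s i * (p (Suc i) k - p 0 k))"
      by (simp add: sum_distrib_right right_diff_distrib sum_subtractf)
    also have "\<dots> = e s k" using ge that by simp
    finally show ?thesis .
  qed
  have "in_span m r e \<zeta> (\<lambda>k. 0)"
    unfolding in_span_def
  proof (intro allI impI)
    fix k assume k: "k<m"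
    have "0 = (\<Sum>i<Suc K. Y i * p i k)" using Yall by simp
    also have "\<dots> = (\<Sum>t\<in>J. \<beta> t * (\<Sum>i<Suc K. X t i * p i k)) + (\<Sum>s<r. \<zeta> s * (\<Sum>i<Suc K. \<Gamma> s i * p i k))"
      unfolding Y_def distrib_right sum.distrib sum_comb_swap2 ..
    also have "\<dots> = (\<Sum>s<r. \<zeta> s * e s k)" using rel2 k Ge by simp
    finally show "0 = (\<Sum>s<r. \<zeta> s * e s k)" .
  qed
  then have z0: "\<zeta> s = 0" if "s<r" for s
  proof -
    have "ip m (\<lambda>k. 0) (e s) = \<zeta> s" by (rule span_coef[OF on \<open>in_span m r e \<zeta> (\<lambda>k. 0)\<close> that])
    then show ?thesis unfolding ip_def by simp
  qed
  have "\<forall>i<Suc K. (\<Sum>t\<in>J. \<beta> t * X t i) = 0"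
    using Yall z0 unfolding Y_def by simp
  then have b0: "\<forall>t\<in>J. \<beta> t = 0" by (rule ind)
  have "\<forall>u\<in>U. y u = 0"
    unfolding U_def using b0 z0 unfolding \<beta>_def \<zeta>_def by auto
  then show False using y(1) by blast
qed


lemma sum_prefix_zero:
  fixes r n :: nat and f :: "nat \<Rightarrow> real"
  assumes "r \<le> n" "\<And>k. r \<le> k \<Longrightarrow> f k = (0::real)"
  shows "(\<Sum>k<n. f k) = (\<Sum>k<r. f k)"
proof (rule sum.mono_neutral_right)
  show "finite {..<n}" by simp
  show "{..<r} \<subseteq> {..<n}" using assms(1) by auto
  show "\<forall>i\<in>{..<n} - {..<r}. f i = 0" using assms(2) by auto
qed

lemma embed:
  fixes p X :: "nat \<Rightarrow> nat \<Rightarrow> real" and c :: "nat \<Rightarrow> real"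
  assumes sph: "\<And>i. i < Suc K \<Longrightarrow> (\<Sum>k<m. (p i k - c k)^2) = \<rho>"
    and fJ: "finite J" and cJ: "Suc K \<le> card J + n + 1"
    and rel1: "\<And>t. t\<in>J \<Longrightarrow> (\<Sum>i<Suc K. X t i) = 0"
    and rel2: "\<And>t k. t\<in>J \<Longrightarrow> k<m \<Longrightarrow> (\<Sum>i<Suc K. X t i * p i k) = 0"
    and ind: "\<And>\<beta>. (\<forall>i<Suc K. (\<Sum>t\<in>J. \<beta> t * X t i) = 0) \<Longrightarrow> (\<forall>t\<in>J. \<beta> t = 0)"
  shows "\<exists>p' c' \<rho>'. (\<forall>i<Suc K. \<forall>k\<ge>n. p' i k = 0) \<and> (\<forall>k\<ge>n. c' k = 0)
     \<and> (\<forall>i<Suc K. \<forall>j<Suc K. (\<Sum>k<n. (p' i k - p' j k)^2) = (\<Sum>k<m. (p i k - p j k)^2))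
     \<and> (\<forall>i<Suc K. (\<Sum>k<n. (p' i k - c' k)^2) = \<rho>')"
proof -
  obtain r e \<gamma> where on: "orthonormal m r e"
    and sp: "\<forall>i<K. \<exists>\<beta>. in_span m r e \<beta> (\<lambda>k. p (Suc i) k - p 0 k)"
    and ge: "\<forall>s<r. \<forall>k<m. e s k = (\<Sum>i<K. \<gamma> s i * (p (Suc i) k - p 0 k))"
    using gram_schmidt_fun[of m K "\<lambda>i k. p (Suc i) k - p 0 k"] by blast
  have rn: "r \<le> n" by (rule rank_bound[OF on ge fJ cJ rel1 rel2 ind])
  define D where "D i k = p i k - p 0 k" for i k
  have spD: "\<forall>i. \<exists>\<beta>. i < Suc K \<longrightarrow> in_span m r e \<beta> (D i)"
  proof
    fix i
    show "\<exists>\<beta>. i < Suc K \<longrightarrow> in_span m r e \<beta> (D i)"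
    proof (cases i)
      case 0
      have "in_span m r e (\<lambda>_. 0) (D i)" unfolding in_span_def D_def 0 by simp
      then show ?thesis by blast
    next
      case (Suc i')
      show ?thesis
      proof (cases "i < Suc K")
        case True
        then have "i' < K" using Suc by simp
        then obtain \<beta> where "in_span m r e \<beta> (\<lambda>k. p (Suc i') k - p 0 k)" using sp by blast
        then have "in_span m r e \<beta> (D i)" unfolding D_def Suc .
        then show ?thesis by blast
      qed auto
    qed
  qed
  then obtain B where B: "\<forall>i. i < Suc K \<longrightarrow> in_span m r e (B i) (D i)"
    using choice[OF spD] by blast
  define g where "g k = p 0 k - c k" for k
  define b where "b s = ip m g (e s)" for s
  define h where "h k = (\<Sum>s<r. b s * e s k)" for k
  define gp where "gp k = g k - h k" for k
  have hs: "in_span m r e b h" unfolding in_span_def h_def by simp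
  have gp_orth: "\<forall>s<r. ip m (e s) gp = 0"
  proof (intro allI impI)
    fix s assume s: "s<r"
    have "ip m (e s) gp = ip m (e s) g - ip m (e s) h"
      unfolding gp_def ip_def by (simp add: right_diff_distrib sum_subtractf)
    also have "ip m (e s) h = b s" using span_coef[OF on hs s] by (simp add: ip_sym)
    also have "ip m (e s) g = b s" unfolding b_def by (simp add: ip_sym)
    finally show "ip m (e s) gp = 0" by simp
  qed
  define p' where "p' i k = (if k < r then B i k else 0)" for i k
  define c' where "c' k = (if k < r then - b k else 0)" for k
  define \<rho>' where "\<rho>' = \<rho> - ip m gp gp"
  have d1: "\<forall>i<Suc K. \<forall>k\<ge>n. p' i k = 0" unfolding p'_def using rn by auto
  have d2: "\<forall>k\<ge>n. c' k = 0" unfolding c'_def using rn by auto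
  have d3: "\<forall>i<Suc K. \<forall>j<Suc K. (\<Sum>k<n. (p' i k - p' j k)^2) = (\<Sum>k<m. (p i k - p j k)^2)"
  proof (intro allI impI)
    fix i j assume i: "i < Suc K" and j: "j < Suc K"
    have Bi: "in_span m r e (B i) (D i)" and Bj: "in_span m r e (B j) (D j)" using B i j by auto
    have sij: "in_span m r e (\<lambda>s. B i s - B j s) (\<lambda>k. p i k - p j k)"
      unfolding in_span_def
    proof (intro allI impI)
      fix k assume k: "k<m"
      have "p i k - p j k = D i k - D j k" unfolding D_def by simp
      also have "\<dots> = (\<Sum>s<r. B i s * e s k) - (\<Sum>s<r. B j s * e s k)"
        using Bi Bj k unfolding in_span_def by simp
      also have "\<dots> = (\<Sum>s<r. (B i s - B j s) * e s k)" by (simp add: left_diff_distrib sum_subtractf)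
      finally show "p i k - p j k = (\<Sum>s<r. (B i s - B j s) * e s k)" .
    qed
    have "(\<Sum>k<m. (p i k - p j k)^2) = ip m (\<lambda>k. p i k - p j k) (\<lambda>k. p i k - p j k)"
      unfolding ip_def power2_eq_square ..
    also have "\<dots> = (\<Sum>s<r. (B i s - B j s) * (B i s - B j s))" by (rule span_norm[OF on sij])
    also have "\<dots> = (\<Sum>k<n. (p' i k - p' j k)^2)"
      by (subst sum_prefix_zero[OF rn]) (auto simp: p'_def power2_eq_square)
    finally show "(\<Sum>k<n. (p' i k - p' j k)^2) = (\<Sum>k<m. (p i k - p j k)^2)" by simp
  qed
  have d4: "\<forall>i<Suc K. (\<Sum>k<n. (p' i k - c' k)^2) = \<rho>'"
  proof (intro allI impI)
    fix i assume i: "i < Suc K"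
    have Bi: "in_span m r e (B i) (D i)" using B i by auto
    define y where "y k = D i k + h k" for k
    have ys: "in_span m r e (\<lambda>s. B i s + b s) y"
      unfolding in_span_def
    proof (intro allI impI)
      fix k assume k: "k<m"
      have "y k = (\<Sum>s<r. B i s * e s k) + (\<Sum>s<r. b s * e s k)"
        unfolding y_def h_def using Bi k unfolding in_span_def by simp
      also have "\<dots> = (\<Sum>s<r. (B i s + b s) * e s k)" by (simp add: distrib_right sum.distrib)
      finally show "y k = (\<Sum>s<r. (B i s + b s) * e s k)" .
    qed
    have "\<rho> = (\<Sum>k<m. (p i k - c k)^2)" using sph[OF i] by simp
    also have "\<dots> = ip m (\<lambda>k. y k + gp k) (\<lambda>k. y k + gp k)"
      unfolding ip_def power2_eq_square y_def gp_def D_def g_def by simp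
    also have "\<dots> = ip m y y + 2 * ip m y gp + ip m gp gp" by (rule ip_add_self)
    also have "ip m y gp = 0" by (rule span_orth[OF ys gp_orth])
    also have "ip m y y = (\<Sum>s<r. (B i s + b s) * (B i s + b s))" by (rule span_norm[OF on ys])
    finally have "\<rho> = (\<Sum>s<r. (B i s + b s) * (B i s + b s)) + ip m gp gp" by simp
    moreover have "(\<Sum>k<n. (p' i k - c' k)^2) = (\<Sum>s<r. (B i s + b s) * (B i s + b s))"
      by (subst sum_prefix_zero[OF rn]) (auto simp: p'_def c'_def power2_eq_square)
    ultimately show "(\<Sum>k<n. (p' i k - c' k)^2) = \<rho>'" unfolding \<rho>'_def by simp
  qed
  show ?thesis using d1 d2 d3 d4 by blast
qed


lemma gram_expand:
  fixes w :: "nat \<Rightarrow> nat \<Rightarrow> real" and c x :: "nat \<Rightarrow> real"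
  shows "(\<Sum>k<m. (\<Sum>i<N. x i * (w i k - c k))^2) =
    (\<Sum>i<N. \<Sum>j<N. x i * x j * ((\<Sum>k<m. (w i k - c k)^2) / 2 + (\<Sum>k<m. (w j k - c k)^2) / 2 - (\<Sum>k<m. (w i k - w j k)^2) / 2))"
proof -
  have pt: "(w i k - c k) * (w j k - c k) = ((w i k - c k)^2 / 2 + (w j k - c k)^2 / 2 - (w i k - w j k)^2 / 2)" for i j k
    by (simp add: power2_eq_square field_simps)
  have "(\<Sum>k<m. (\<Sum>i<N. x i * (w i k - c k))^2) = (\<Sum>k<m. \<Sum>i<N. \<Sum>j<N. x i * x j * ((w i k - c k) * (w j k - c k)))"
    unfolding power2_eq_square by (simp add: sum_product mult_ac)
  also have "\<dots> = (\<Sum>i<N. \<Sum>j<N. \<Sum>k<m. x i * x j * ((w i k - c k) * (w j k - c k)))"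
  proof -
    have "(\<Sum>k<m. \<Sum>i<N. \<Sum>j<N. x i * x j * ((w i k - c k) * (w j k - c k))) = (\<Sum>i<N. \<Sum>k<m. \<Sum>j<N. x i * x j * ((w i k - c k) * (w j k - c k)))"
      by (rule sum.swap)
    also have "\<dots> = (\<Sum>i<N. \<Sum>j<N. \<Sum>k<m. x i * x j * ((w i k - c k) * (w j k - c k)))"
      by (rule sum.cong[OF refl], rule sum.swap)
    finally show ?thesis .
  qed
  also have "\<dots> = (\<Sum>i<N. \<Sum>j<N. x i * x j * ((\<Sum>k<m. (w i k - c k)^2) / 2 + (\<Sum>k<m. (w j k - c k)^2) / 2 - (\<Sum>k<m. (w i k - w j k)^2) / 2))"
    unfolding pt
  proof (rule sum.cong[OF refl], rule sum.cong[OF refl])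
    fix i j
    show "(\<Sum>k<m. x i * x j * ((w i k - c k)\<^sup>2 / 2 + (w j k - c k)\<^sup>2 / 2 - (w i k - w j k)\<^sup>2 / 2)) =
      x i * x j * ((\<Sum>k<m. (w i k - c k)\<^sup>2) / 2 + (\<Sum>k<m. (w j k - c k)\<^sup>2) / 2 - (\<Sum>k<m. (w i k - w j k)\<^sup>2) / 2)"
      by (simp add: sum_distrib_left[symmetric] sum.distrib sum_subtractf sum_divide_distrib)
  qed
  finally show ?thesis .
qed

lemma quad_split:
  fixes x f :: "nat \<Rightarrow> real" and aa :: "nat \<Rightarrow> nat \<Rightarrow> real"
  shows "(\<Sum>i<N. \<Sum>j<N. x i * x j * (f i + f j + \<alpha> + \<beta> * aa i j + (if i = j then \<gamma> else 0)))
    = 2 * (\<Sum>i<N. x i * f i) * (\<Sum>i<N. x i) + \<alpha> * (\<Sum>i<N. x i)^2 + \<beta> * (\<Sum>i<N. x i * (\<Sum>j<N. aa i j * x j)) + \<gamma> * (\<Sum>i<N. x i * x i)"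
proof -
  have 1: "(\<Sum>i<N. \<Sum>j<N. x i * x j * f i) = (\<Sum>i<N. x i * f i) * (\<Sum>i<N. x i)"
    unfolding sum_product by (rule sum.cong[OF refl], rule sum.cong[OF refl], simp)
  have 2: "(\<Sum>i<N. \<Sum>j<N. x i * x j * f j) = (\<Sum>i<N. x i * f i) * (\<Sum>i<N. x i)"
  proof -
    have "(\<Sum>i<N. \<Sum>j<N. x i * x j * f j) = (\<Sum>i<N. x i) * (\<Sum>j<N. x j * f j)"
      by (simp add: sum_product mult_ac)
    then show ?thesis by (simp only: mult.commute)
  qed
  have 3: "(\<Sum>i<N. \<Sum>j<N. x i * x j * \<alpha>) = \<alpha> * (\<Sum>i<N. x i)^2"
    unfolding power2_eq_square by (simp add: sum_product mult_ac sum_distrib_left)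
  have 4: "(\<Sum>i<N. \<Sum>j<N. x i * x j * (\<beta> * aa i j)) = \<beta> * (\<Sum>i<N. x i * (\<Sum>j<N. aa i j * x j))"
    by (simp add: sum_distrib_left mult_ac)
  have 5: "(\<Sum>i<N. \<Sum>j<N. x i * x j * (if i = j then \<gamma> else 0)) = \<gamma> * (\<Sum>i<N. x i * x i)"
    by (simp add: sum_distrib_left if_distrib mult_ac cong: if_cong)
  have "(\<Sum>i<N. \<Sum>j<N. x i * x j * (f i + f j + \<alpha> + \<beta> * aa i j + (if i = j then \<gamma> else 0)))
    = (\<Sum>i<N. \<Sum>j<N. x i * x j * f i) + (\<Sum>i<N. \<Sum>j<N. x i * x j * f j) + (\<Sum>i<N. \<Sum>j<N. x i * x j * \<alpha>)
      + (\<Sum>i<N. \<Sum>j<N. x i * x j * (\<beta> * aa i j)) + (\<Sum>i<N. \<Sum>j<N. x i * x j * (if i = j then \<gamma> else 0))"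
    by (simp add: distrib_left sum.distrib)
  then show ?thesis using 1 2 3 4 5 by simp
qed


lemma mult_mat_index_sum:
  fixes A B :: "'a::comm_ring_1 mat"
  assumes "A \<in> carrier_mat n m" "B \<in> carrier_mat m l" "i<n" "j<l"
  shows "(A * B) $$ (i,j) = (\<Sum>k<m. A $$ (i,k) * B $$ (k,j))"
  using assms by (simp add: scalar_prod_def atLeast0LessThan)

lemma order_prod_linear:
  fixes N :: nat and lam :: "nat \<Rightarrow> real"
  shows "Polynomial.order \<mu> (\<Prod>i<N. [:- lam i, 1:]) = card {i. i<N \<and> lam i = (\<mu>::real)}"
proof (induction N)
  case 0
  then show ?case by simp
next
  case (Suc N)
  have p1: "(\<Prod>i<N. [:- lam i, 1:]) \<noteq> 0" by (subst prod_zero_iff) auto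
  have p2: "[:- lam N, 1:] \<noteq> 0" by simp
  have nz: "(\<Prod>i<N. [:- lam i, 1:]) * [:- lam N, 1:] \<noteq> 0"
    using p1 p2 mult_eq_0_iff by blast
  have "Polynomial.order \<mu> (\<Prod>i<Suc N. [:- lam i, 1:]) = Polynomial.order \<mu> ((\<Prod>i<N. [:- lam i, 1:]) * [:- lam N, 1:])"
    by simp
  also have "\<dots> = card {i. i<N \<and> lam i = \<mu>} + (if lam N = \<mu> then 1 else 0)"
    using order_mult[OF nz] Suc.IH by (simp add: order_linear')
  also have "\<dots> = card {i. i<Suc N \<and> lam i = \<mu>}"
  proof (cases "lam N = \<mu>")
    case True
    then have "{i. i<Suc N \<and> lam i = \<mu>} = insert N {i. i<N \<and> lam i = \<mu>}" by auto
    then show ?thesis using True by simp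
  next
    case False
    then have "{i. i<Suc N \<and> lam i = \<mu>} = {i. i<N \<and> lam i = \<mu>}" using less_Suc_eq by auto
    then show ?thesis using False by simp
  qed
  finally show ?case .
qed

lemma prod_list_conv: "(\<Prod>a\<leftarrow>map lam [0..<N]. [:- a, 1:]) = (\<Prod>i<N. [:- lam i, 1:] :: real poly)"
  by (induction N) (auto simp: mult.commute)

lemma edist_sq: "(edist m x y)^2 = (\<Sum>k<m. (x k - y k)^2)"
  unfolding edist_def by (simp add: sum_nonneg)

lemma rep_unpack:
  assumes rep: "two_dist_rep m N E p" and sg: "simple_graph N E"
  obtains a1 a2 where "a2 < a1" "0 \<le> a2"
    "{edist m (p i) (p j) | i j. i < N \<and> j < N \<and> i \<noteq> j} = {a1, a2}"
    "\<forall>i<N. \<forall>j<N. i \<noteq> j \<longrightarrow> (E i j \<longleftrightarrow> edist m (p i) (p j) = a1)"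
    "\<forall>i<N. \<forall>j<N. (\<Sum>k<m. (p i k - p j k)^2) = a2^2 + (a1^2 - a2^2) * (if E i j then 1 else 0) - (if i = j then a2^2 else 0)"
proof -
  have ex: "\<exists>a1 a2. a1 > a2 \<and> {edist m (p i) (p j) | i j. i < N \<and> j < N \<and> i \<noteq> j} = {a1, a2} \<and>
        (\<forall>i<N. \<forall>j<N. i \<noteq> j \<longrightarrow> (E i j \<longleftrightarrow> edist m (p i) (p j) = a1))"
    using rep unfolding two_dist_rep_def by (rule conjunct2[THEN conjunct2])
  then obtain a1 a2 where a: "a1 > a2" and S: "{edist m (p i) (p j) | i j. i < N \<and> j < N \<and> i \<noteq> j} = {a1, a2}"
    and Ea: "\<forall>i<N. \<forall>j<N. i \<noteq> j \<longrightarrow> (E i j \<longleftrightarrow> edist m (p i) (p j) = a1)"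
    by (elim exE conjE)
  have "a2 \<in> {edist m (p i) (p j) | i j. i < N \<and> j < N \<and> i \<noteq> j}" unfolding S by simp
  then obtain i0 j0 where "a2 = edist m (p i0) (p j0)" by (elim CollectE exE conjE)
  then have a20: "a2 \<ge> 0" unfolding edist_def by (simp add: sum_nonneg)
  have sq: "(\<Sum>k<m. (p i k - p j k)^2) = a2^2 + (a1^2 - a2^2) * (if E i j then 1 else 0) - (if i = j then a2^2 else 0)"
    if ij: "i<N" "j<N" for i j
  proof (cases "i = j")
    case True
    have irr: "\<forall>i<N. \<not> E i i" using sg unfolding simple_graph_def by (rule conjunct2)
    then have "\<not> E i j" using ij True by simp
    then show ?thesis using True by simp
  next
    case False
    have "edist m (p i) (p j) \<in> {edist m (p i) (p j) | i j. i < N \<and> j < N \<and> i \<noteq> j}"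
      by (rule CollectI, rule exI[of _ i], rule exI[of _ j]) (use ij False in simp)
    then have mem: "edist m (p i) (p j) \<in> {a1, a2}" unfolding S .
    have Eiff: "E i j \<longleftrightarrow> edist m (p i) (p j) = a1" using Ea ij False by simp
    have e2: "(edist m (p i) (p j))^2 = (\<Sum>k<m. (p i k - p j k)^2)" by (rule edist_sq)
    show ?thesis
    proof (cases "E i j")
      case True
      then have "edist m (p i) (p j) = a1" using Eiff by simp
      then show ?thesis using e2 True False by simp
    next
      case nE: False
      then have "edist m (p i) (p j) \<noteq> a1" using Eiff by simp
      then have "edist m (p i) (p j) = a2" using mem by simp
      then show ?thesis using e2 nE False by simp
    qed
  qed
  have sq': "\<forall>i<N. \<forall>j<N. (\<Sum>k<m. (p i k - p j k)^2) = a2^2 + (a1^2 - a2^2) * (if E i j then 1 else 0) - (if i = j then a2^2 else 0)"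
    using sq by simp
  show ?thesis by (rule that[OF a a20 S Ea sq'])
qed

lemma rep_quad:
  fixes p :: "nat \<Rightarrow> nat \<Rightarrow> real" and c x :: "nat \<Rightarrow> real" and aa :: "nat \<Rightarrow> nat \<Rightarrow> real"
  assumes sq: "\<forall>i<N. \<forall>j<N. (\<Sum>k<m. (p i k - p j k)^2) = A2 + (A1 - A2) * aa i j - (if i = j then A2 else 0)"
  shows "(\<Sum>k<m. (\<Sum>i<N. x i * (p i k - c k))^2) =
    2 * (\<Sum>i<N. x i * ((\<Sum>k<m. (p i k - c k)^2) / 2)) * (\<Sum>i<N. x i) + (- A2 / 2) * (\<Sum>i<N. x i)^2
    + (- (A1 - A2) / 2) * (\<Sum>i<N. x i * (\<Sum>j<N. aa i j * x j)) + (A2 / 2) * (\<Sum>i<N. x i * x i)"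
proof -
  define f where "f i = (\<Sum>k<m. (p i k - c k)^2) / 2" for i
  have "(\<Sum>k<m. (\<Sum>i<N. x i * (p i k - c k))^2) =
    (\<Sum>i<N. \<Sum>j<N. x i * x j * ((\<Sum>k<m. (p i k - c k)^2) / 2 + (\<Sum>k<m. (p j k - c k)^2) / 2 - (\<Sum>k<m. (p i k - p j k)^2) / 2))"
    by (rule gram_expand)
  also have "\<dots> = (\<Sum>i<N. \<Sum>j<N. x i * x j * (f i + f j + (- A2 / 2) + (- (A1 - A2) / 2) * aa i j + (if i = j then A2 / 2 else 0)))"
  proof (rule sum.cong[OF refl], rule sum.cong[OF refl])
    fix i j assume "i \<in> {..<N}" "j \<in> {..<N}"
    then have e: "(\<Sum>k<m. (p i k - p j k)^2) = A2 + (A1 - A2) * aa i j - (if i = j then A2 else 0)" using sq by auto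
    show "x i * x j * ((\<Sum>k<m. (p i k - c k)^2) / 2 + (\<Sum>k<m. (p j k - c k)^2) / 2 - (\<Sum>k<m. (p i k - p j k)^2) / 2)
      = x i * x j * (f i + f j + (- A2 / 2) + (- (A1 - A2) / 2) * aa i j + (if i = j then A2 / 2 else 0))"
      unfolding f_def e by (cases "i = j") (simp_all add: field_simps)
  qed
  also have "\<dots> = 2 * (\<Sum>i<N. x i * f i) * (\<Sum>i<N. x i) + (- A2 / 2) * (\<Sum>i<N. x i)^2
    + (- (A1 - A2) / 2) * (\<Sum>i<N. x i * (\<Sum>j<N. aa i j * x j)) + (A2 / 2) * (\<Sum>i<N. x i * x i)"
    by (rule quad_split)
  finally show ?thesis unfolding f_def .
qed


lemma in_Rm_eq:
  assumes "in_Rm m x" "in_Rm m y" "(\<Sum>k<m. (x k - y k)^2) = 0"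
  shows "x = y"
proof (rule ext)
  fix k
  show "x k = y k"
  proof (cases "k < m")
    case True
    have "\<forall>k\<in>{..<m}. (x k - y k)^2 = 0"
      using sum_nonneg_eq_0_iff[of "{..<m}" "\<lambda>k. (x k - y k)^2"] assms(3) by simp
    then show ?thesis using True by simp
  next
    case False
    then show ?thesis using assms(1,2) unfolding in_Rm_def by simp
  qed
qed

lemma sph_from_embed:
  assumes rep: "two_dist_rep m N E p" and N2: "2 \<le> N"
    and d1: "\<forall>i<N. \<forall>k\<ge>n. p' i k = 0" and d2: "\<forall>k\<ge>n. c' k = 0"
    and d3: "\<forall>i<N. \<forall>j<N. (\<Sum>k<n. (p' i k - p' j k)^2) = (\<Sum>k<m. (p i k - p j k)^2)"
    and d4: "\<forall>i<N. (\<Sum>k<n. (p' i k - c' k)^2) = \<rho>'"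
  shows "spherically_representable n N E"
proof -
  have inj: "inj_on p {..<N}" using rep unfolding two_dist_rep_def by (rule conjunct1)
  have inR: "\<forall>i<N. in_Rm m (p i)" using rep unfolding two_dist_rep_def by (rule conjunct2[THEN conjunct1])
  have ex: "\<exists>a1 a2. a1 > a2 \<and> {edist m (p i) (p j) | i j. i < N \<and> j < N \<and> i \<noteq> j} = {a1, a2} \<and>
        (\<forall>i<N. \<forall>j<N. i \<noteq> j \<longrightarrow> (E i j \<longleftrightarrow> edist m (p i) (p j) = a1))"
    using rep unfolding two_dist_rep_def by (rule conjunct2[THEN conjunct2])
  then obtain a1 a2 where a: "a1 > a2" and S: "{edist m (p i) (p j) | i j. i < N \<and> j < N \<and> i \<noteq> j} = {a1, a2}"
    and Ea: "\<forall>i<N. \<forall>j<N. i \<noteq> j \<longrightarrow> (E i j \<longleftrightarrow> edist m (p i) (p j) = a1)"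
    by (elim exE conjE)
  have ed: "edist n (p' i) (p' j) = edist m (p i) (p j)" if "i<N" "j<N" for i j
    unfolding edist_def using d3 that by simp
  have peq: "p i = p j" if "i<N" "j<N" "(\<Sum>k<n. (p' i k - p' j k)^2) = 0" for i j
  proof -
    have "(\<Sum>k<m. (p i k - p j k)^2) = 0" using d3 that by simp
    then show ?thesis by (rule in_Rm_eq[OF inR[rule_format, OF that(1)] inR[rule_format, OF that(2)]])
  qed
  have inj': "inj_on p' {..<N}"
  proof (rule inj_onI)
    fix i j assume i: "i \<in> {..<N}" and j: "j \<in> {..<N}" and eq: "p' i = p' j"
    have "p i = p j" by (rule peq) (use i j eq in auto)
    then show "i = j" using inj i j unfolding inj_on_def by blast
  qed
  have inR': "\<forall>i<N. in_Rm n (p' i)" using d1 unfolding in_Rm_def by blast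
  have Seq: "{edist n (p' i) (p' j) | i j. i < N \<and> j < N \<and> i \<noteq> j} = {edist m (p i) (p j) | i j. i < N \<and> j < N \<and> i \<noteq> j}"
  proof (rule Collect_cong, rule iffI)
    fix u assume "\<exists>i j. u = edist n (p' i) (p' j) \<and> i < N \<and> j < N \<and> i \<noteq> j"
    then obtain i j where h: "u = edist n (p' i) (p' j)" "i < N" "j < N" "i \<noteq> j" by (elim exE conjE)
    then have "u = edist m (p i) (p j)" using ed by simp
    then show "\<exists>i j. u = edist m (p i) (p j) \<and> i < N \<and> j < N \<and> i \<noteq> j" using h by blast
  next
    fix u assume "\<exists>i j. u = edist m (p i) (p j) \<and> i < N \<and> j < N \<and> i \<noteq> j"
    then obtain i j where h: "u = edist m (p i) (p j)" "i < N" "j < N" "i \<noteq> j" by (elim exE conjE)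
    then have "u = edist n (p' i) (p' j)" using ed by simp
    then show "\<exists>i j. u = edist n (p' i) (p' j) \<and> i < N \<and> j < N \<and> i \<noteq> j" using h by blast
  qed
  have Ea': "\<forall>i<N. \<forall>j<N. i \<noteq> j \<longrightarrow> (E i j \<longleftrightarrow> edist n (p' i) (p' j) = a1)"
    using Ea ed by simp
  have S': "{edist n (p' i) (p' j) | i j. i < N \<and> j < N \<and> i \<noteq> j} = {a1, a2}" using Seq S by simp
  have rep': "two_dist_rep n N E p'"
    unfolding two_dist_rep_def
    by (intro conjI inj' inR' exI[of _ a1] exI[of _ a2] a S' Ea')
  have r0: "\<rho>' = (\<Sum>k<n. (p' 0 k - c' k)^2)" using d4 N2 by simp
  have rnn: "\<rho>' \<ge> 0" unfolding r0 by (rule sum_nonneg) simp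
  have rpos: "\<rho>' > 0"
  proof (rule ccontr)
    assume "\<not> \<rho>' > 0"
    then have z: "\<rho>' = 0" using rnn by simp
    have z0: "\<forall>k<n. p' 0 k = c' k"
    proof -
      have "\<forall>k\<in>{..<n}. (p' 0 k - c' k)^2 = 0"
        using sum_nonneg_eq_0_iff[of "{..<n}" "\<lambda>k. (p' 0 k - c' k)^2"] d4 N2 z by simp
      then show ?thesis by simp
    qed
    have z1: "\<forall>k<n. p' 1 k = c' k"
    proof -
      have "\<forall>k\<in>{..<n}. (p' 1 k - c' k)^2 = 0"
        using sum_nonneg_eq_0_iff[of "{..<n}" "\<lambda>k. (p' 1 k - c' k)^2"] d4 N2 z by simp
      then show ?thesis by simp
    qed
    have "(\<Sum>k<n. (p' 0 k - p' 1 k)^2) = 0" using z0 z1 by simp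
    then have "p 0 = p 1" using peq N2 by simp
    moreover have "(0::nat) \<in> {..<N}" "(1::nat) \<in> {..<N}" using N2 by auto
    ultimately have "(0::nat) = 1" using inj unfolding inj_on_def by blast
    then show False by simp
  qed
  have cR': "in_Rm n c'" using d2 unfolding in_Rm_def by blast
  have "\<forall>i<N. edist n (p' i) c' = sqrt \<rho>'" unfolding edist_def using d4 by simp
  then show ?thesis unfolding spherically_representable_def
    using rep' cR' rpos by (intro exI[of _ p'] exI[of _ c'] exI[of _ "sqrt \<rho>'"]) simp
qed


theorem proposition1p2:
  fixes d n :: nat and E :: "nat \<Rightarrow> nat \<Rightarrow> bool" and lam :: "nat \<Rightarrow> real"
  assumes "0 < n" and "n \<le> d"
    and "simple_graph (d + 2) E"
    and "char_poly (adj_matrix (d + 2) E) = (\<Prod>i<d + 2. [:- lam i, 1:])"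
    and "\<forall>i j. i \<le> j \<longrightarrow> j < d + 2 \<longrightarrow> lam j \<le> lam i"
    and "spherically_representable d (d + 2) E"
  shows "(representable n (d + 2) E \<longleftrightarrow> card {i. 1 \<le> i \<and> i < d + 2 \<and> lam i = lam 1} \<ge> d + 1 - n)
       \<and> (spherically_representable n (d + 2) E \<longleftrightarrow> card {i. 1 \<le> i \<and> i < d + 2 \<and> lam i = lam 1} \<ge> d + 1 - n)"
proof -
  define N where "N = d + 2"
  have N2: "2 \<le> N" and Nd: "N = Suc (d + 1)" unfolding N_def by simp_all
  define aa where "aa i j = (if E i j then 1 else (0::real))" for i j
  define A where "A = adj_matrix N E"
  have Ac: "A \<in> carrier_mat N N" unfolding A_def adj_matrix_def by simp
  have Aij: "A $$ (i,j) = aa i j" if "i<N" "j<N" for i j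
    using that unfolding A_def adj_matrix_def aa_def by simp
  have sg: "simple_graph N E" using assms(3) unfolding N_def .
  have Esym: "\<forall>i<N. \<forall>j<N. E i j \<longrightarrow> E j i" using sg unfolding simple_graph_def by (rule conjunct1)
  have aa_sym: "aa i j = aa j i" if "i<N" "j<N" for i j
  proof -
    have "E i j \<longleftrightarrow> E j i" using Esym that by blast
    then show ?thesis unfolding aa_def by simp
  qed
  have AT: "A\<^sup>T = A"
  proof (rule eq_matI)
    fix i j assume "i < dim_row A" "j < dim_col A"
    then have ij: "i<N" "j<N" using Ac by auto
    then show "A\<^sup>T $$ (i, j) = A $$ (i, j)" using Ac Aij aa_sym by simp
  qed (use Ac in auto)
  have cp: "char_poly A = (\<Prod>a\<leftarrow>map lam [0..<N]. [:-a,1:])"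
    using assms(4) unfolding A_def N_def prod_list_conv .
  obtain P Q dd where Pc: "P \<in> carrier_mat N N" and Qc: "Q \<in> carrier_mat N N"
    and PQ: "P * Q = 1\<^sub>m N" and QP: "Q * P = 1\<^sub>m N"
    and AP: "A * P = P * mat N N (\<lambda>(i,j). if i=j then dd i else 0)"
    and QA: "Q * A = mat N N (\<lambda>(i,j). if i=j then dd i else 0) * Q"
    and ord: "\<And>\<mu>. Polynomial.order \<mu> (char_poly A) = card {i. i<N \<and> dd i = \<mu>}"
    using sym_diag[OF Ac AT cp] by blast
  define Dm where "Dm = mat N N (\<lambda>(i,j). if i=j then dd i else (0::real))"
  have Dc: "Dm \<in> carrier_mat N N" unfolding Dm_def by simp
  define V where "V k i = P $$ (i,k)" for k i
  define Qm where "Qm k i = Q $$ (k,i)" for k i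
  have delta: "(\<Sum>j<N. f j * (if j = k then dd j else 0)) = f k * dd k" if "k<N" for f :: "nat \<Rightarrow> real" and k
  proof -
    have "(\<Sum>j<N. f j * (if j = k then dd j else 0)) = (\<Sum>j<N. if j = k then f k * dd k else 0)"
      by (rule sum.cong) auto
    then show ?thesis using that by simp
  qed
  have delta2: "(\<Sum>j<N. (if k = j then dd k else 0) * f j) = dd k * f k" if "k<N" for f :: "nat \<Rightarrow> real" and k
  proof -
    have "(\<Sum>j<N. (if k = j then dd k else 0) * f j) = (\<Sum>j<N. if j = k then dd k * f k else 0)"
      by (rule sum.cong) auto
    then show ?thesis using that by simp
  qed
  interpret sp: spec N aa V Qm dd
  proof
    fix i j assume "i<N" "j<N" then show "aa i j = aa j i" by (rule aa_sym)
  next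
    fix i k assume i: "i<N" and k: "k<N"
    have "(A * P) $$ (i,k) = (\<Sum>j<N. A $$ (i,j) * P $$ (j,k))" by (rule mult_mat_index_sum[OF Ac Pc i k])
    also have "\<dots> = (\<Sum>j<N. aa i j * V k j)" unfolding V_def by (rule sum.cong) (use Aij i in auto)
    finally have 1: "(A * P) $$ (i,k) = (\<Sum>j<N. aa i j * V k j)" .
    have "(P * Dm) $$ (i,k) = (\<Sum>j<N. P $$ (i,j) * Dm $$ (j,k))" by (rule mult_mat_index_sum[OF Pc Dc i k])
    also have "\<dots> = (\<Sum>j<N. P $$ (i,j) * (if j = k then dd j else 0))"
      unfolding Dm_def by (rule sum.cong) (use k in auto)
    also have "\<dots> = P $$ (i,k) * dd k" by (rule delta[OF k])
    finally have 2: "(P * Dm) $$ (i,k) = P $$ (i,k) * dd k" .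
    show "(\<Sum>j<N. aa i j * V k j) = dd k * V k i" using 1 2 AP unfolding Dm_def V_def by (simp add: mult.commute)
  next
    fix k i assume k: "k<N" and i: "i<N"
    have "(Q * A) $$ (k,i) = (\<Sum>j<N. Q $$ (k,j) * A $$ (j,i))" by (rule mult_mat_index_sum[OF Qc Ac k i])
    also have "\<dots> = (\<Sum>j<N. Qm k j * aa j i)" unfolding Qm_def by (rule sum.cong) (use Aij i in auto)
    finally have 1: "(Q * A) $$ (k,i) = (\<Sum>j<N. Qm k j * aa j i)" .
    have "(Dm * Q) $$ (k,i) = (\<Sum>j<N. Dm $$ (k,j) * Q $$ (j,i))" by (rule mult_mat_index_sum[OF Dc Qc k i])
    also have "\<dots> = (\<Sum>j<N. (if k = j then dd k else 0) * Q $$ (j,i))"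
      unfolding Dm_def by (rule sum.cong) (use k in auto)
    also have "\<dots> = dd k * Q $$ (k,i)" by (rule delta2[OF k])
    finally have 2: "(Dm * Q) $$ (k,i) = dd k * Q $$ (k,i)" .
    show "(\<Sum>j<N. Qm k j * aa j i) = dd k * Qm k i" using 1 2 QA unfolding Dm_def Qm_def by simp
  next
    fix i j assume i: "i<N" and j: "j<N"
    have "(P * Q) $$ (i,j) = (\<Sum>k<N. P $$ (i,k) * Q $$ (k,j))" by (rule mult_mat_index_sum[OF Pc Qc i j])
    then show "(\<Sum>k<N. V k i * Qm k j) = (if i = j then 1 else 0)"
      using PQ i j unfolding V_def Qm_def by simp
  next
    fix k l assume k: "k<N" and l: "l<N"
    have "(Q * P) $$ (k,l) = (\<Sum>j<N. Q $$ (k,j) * P $$ (j,l))" by (rule mult_mat_index_sum[OF Qc Pc k l])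
    then show "(\<Sum>j<N. Qm k j * V l j) = (if k = l then 1 else 0)"
      using QP k l unfolding V_def Qm_def by simp
  qed

  have sph0: "\<exists>p c r. two_dist_rep d N E p \<and> in_Rm d c \<and> r > 0 \<and> (\<forall>i<N. edist d (p i) c = r)"
    using assms(6) unfolding spherically_representable_def N_def .
  then obtain p c r where rep: "two_dist_rep d N E p" and cR: "in_Rm d c" and r0: "r > 0"
    and pr: "\<forall>i<N. edist d (p i) c = r" by (elim exE conjE)
  obtain a1 a2 where a12: "a2 < a1" "0 \<le> a2"
    and sqa: "\<forall>i<N. \<forall>j<N. (\<Sum>k<d. (p i k - p j k)^2) = a2^2 + (a1^2 - a2^2) * (if E i j then 1 else 0) - (if i = j then a2^2 else 0)"
    by (rule rep_unpack[OF rep sg])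
  define A1 where "A1 = a1^2"
  define A2 where "A2 = a2^2"
  have A12: "A2 < A1" unfolding A1_def A2_def using a12 by (simp add: power_strict_mono)
  have sq: "\<forall>i<N. \<forall>j<N. (\<Sum>k<d. (p i k - p j k)^2) = A2 + (A1 - A2) * aa i j - (if i = j then A2 else 0)"
    using sqa unfolding A1_def A2_def aa_def by simp
  have cen: "(\<Sum>k<d. (p i k - c k)^2) = r^2" if "i<N" for i
    using pr that edist_sq[of d "p i" c] by simp
  define \<kappa> where "\<kappa> = (A1 - A2) / 2"
  define \<theta> where "\<theta> = A2 / (A1 - A2)"
  define s' where "s' = (r^2 - A2 / 2) / \<kappa>"
  have kp: "\<kappa> > 0" unfolding \<kappa>_def using A12 by simp
  have sphq: "(\<Sum>k<d. (\<Sum>i<N. x i * (p i k - c k))^2) =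
      \<kappa> * (\<theta> * (\<Sum>i<N. x i * x i) - (\<Sum>i<N. x i * (\<Sum>j<N. aa i j * x j)) + s' * (\<Sum>i<N. x i)^2)" for x
  proof -
    have f: "(\<Sum>i<N. x i * ((\<Sum>k<d. (p i k - c k)^2) / 2)) = r^2 / 2 * (\<Sum>i<N. x i)"
    proof -
      have "(\<Sum>i<N. x i * ((\<Sum>k<d. (p i k - c k)^2) / 2)) = (\<Sum>i<N. x i * (r^2 / 2))"
        by (rule sum.cong) (simp_all add: cen)
      also have "\<dots> = (\<Sum>i<N. x i) * (r^2 / 2)" by (rule sum_distrib_right[symmetric])
      finally show ?thesis by (simp add: mult.commute)
    qed
    have "(\<Sum>k<d. (\<Sum>i<N. x i * (p i k - c k))^2) =
      2 * (\<Sum>i<N. x i * ((\<Sum>k<d. (p i k - c k)^2) / 2)) * (\<Sum>i<N. x i) + (- A2 / 2) * (\<Sum>i<N. x i)^2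
      + (- (A1 - A2) / 2) * (\<Sum>i<N. x i * (\<Sum>j<N. aa i j * x j)) + (A2 / 2) * (\<Sum>i<N. x i * x i)"
      by (rule rep_quad[OF sq])
    also have "\<dots> = (r^2 - A2 / 2) * (\<Sum>i<N. x i)^2 - \<kappa> * (\<Sum>i<N. x i * (\<Sum>j<N. aa i j * x j)) + (A2 / 2) * (\<Sum>i<N. x i * x i)"
    proof -
      have gen: "\<And>S T U::real. 2 * (r^2 / 2 * S) * S + (- A2 / 2) * S^2 + (- (A1 - A2) / 2) * T + (A2 / 2) * U
          = (r^2 - A2 / 2) * S^2 - ((A1 - A2) / 2) * T + (A2 / 2) * U"
        by (simp add: power2_eq_square field_simps)
      show ?thesis unfolding f \<kappa>_def by (rule gen)
    qed
    also have "\<dots> = \<kappa> * (\<theta> * (\<Sum>i<N. x i * x i) - (\<Sum>i<N. x i * (\<Sum>j<N. aa i j * x j)) + s' * (\<Sum>i<N. x i)^2)"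
    proof -
      have "A1 - A2 \<noteq> 0" using A12 by simp
      then have "\<kappa> * \<theta> = A2 / 2" unfolding \<kappa>_def \<theta>_def by (simp add: field_simps)
      moreover have "\<kappa> * s' = r^2 - A2 / 2" unfolding s'_def using kp by simp
      moreover have "\<And>S T U::real. \<kappa> * (\<theta> * U - T + s' * S) = (\<kappa> * \<theta>) * U - \<kappa> * T + (\<kappa> * s') * S"
        by (simp add: algebra_simps)
      ultimately show ?thesis by simp
    qed
    finally show ?thesis .
  qed
  have psdK: "0 \<le> \<theta> * (\<Sum>i<N. x i * x i) - (\<Sum>i<N. x i * (\<Sum>j<N. aa i j * x j)) + s' * (\<Sum>i<N. x i)^2" for x
  proof -
    have "0 \<le> (\<Sum>k<d. (\<Sum>i<N. x i * (p i k - c k))^2)" by (rule sum_nonneg) simp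
    then show ?thesis unfolding sphq using kp by (simp add: zero_le_mult_iff)
  qed
  have zex: "\<exists>z. (\<exists>i<N. z i \<noteq> 0) \<and> (\<Sum>i<N. z i) = 0 \<and>
      \<theta> * (\<Sum>i<N. z i * z i) - (\<Sum>i<N. z i * (\<Sum>j<N. aa i j * z j)) = 0"
  proof -
    define Lr where "Lr r i = (if r = 0 then 1 else p i (r - 1))" for r i
    have "card {..<d+1} < card {..<N}" unfolding N_def by simp
    from exists_nonzero_solution_set[OF _ _ this, of Lr]
    obtain z where z: "\<exists>j\<in>{..<N}. z j \<noteq> 0" "\<forall>r\<in>{..<d+1}. (\<Sum>j<N. Lr r j * z j) = 0" by auto
    have s0: "(\<Sum>i<N. z i) = 0" using z(2)[rule_format, of 0] unfolding Lr_def by simp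
    have pk: "(\<Sum>i<N. z i * p i k) = 0" if "k<d" for k
    proof -
      have "(\<Sum>j<N. Lr (Suc k) j * z j) = 0" using z(2) that by simp
      then show ?thesis unfolding Lr_def by (simp add: mult.commute)
    qed
    have "(\<Sum>i<N. z i * (p i k - c k)) = 0" if "k<d" for k
    proof -
      have "(\<Sum>i<N. z i * (p i k - c k)) = (\<Sum>i<N. z i * p i k) - (\<Sum>i<N. z i) * c k"
        by (simp add: right_diff_distrib sum_subtractf sum_distrib_right)
      then show ?thesis using pk[OF that] s0 by simp
    qed
    then have "(\<Sum>k<d. (\<Sum>i<N. z i * (p i k - c k))^2) = 0" by simp
    then have "\<theta> * (\<Sum>i<N. z i * z i) - (\<Sum>i<N. z i * (\<Sum>j<N. aa i j * z j)) + s' * (\<Sum>i<N. z i)^2 = 0"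
      unfolding sphq using kp by simp
    then show ?thesis using z(1) s0 by auto
  qed
  have cnt: "card {i. i<N \<and> dd i = \<mu>} = card {i. i<N \<and> lam i = \<mu>}" for \<mu>
    using ord[of \<mu>] order_prod_linear[where N = N and lam = lam and \<mu> = \<mu>] assms(4) unfolding A_def N_def by simp
  interpret co: core N aa V Qm dd lam \<theta> s'
  proof
    show "card {i. i<N \<and> dd i = \<mu>} = card {i. i<N \<and> lam i = \<mu>}" for \<mu> by (rule cnt)
    show "lam j \<le> lam i" if "i \<le> j" "j < N" for i j using assms(5) that unfolding N_def by blast
    show "0 \<le> aa i j" for i j unfolding aa_def by simp
    show "2 \<le> N" by (rule N2)
    show "0 \<le> \<theta> * (\<Sum>i<N. x i * x i) - (\<Sum>i<N. x i * (\<Sum>j<N. aa i j * x j)) + s' * (\<Sum>i<N. x i)^2" for x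
      by (rule psdK)
    show "\<exists>z. (\<exists>i<N. z i \<noteq> 0) \<and> (\<Sum>i<N. z i) = 0 \<and>
      \<theta> * (\<Sum>i<N. z i * z i) - (\<Sum>i<N. z i * (\<Sum>j<N. aa i j * z j)) = 0" by (rule zex)
  qed
  have mult_eq': "co.mult' = card {i. 1 \<le> i \<and> i < d + 2 \<and> lam i = lam 1}"
    using co.mult'_def unfolding N_def by simp
  have I: "d + 1 - n \<le> card {i. 1 \<le> i \<and> i < d + 2 \<and> lam i = lam 1}"
    if "representable n (d + 2) E"
  proof -
    have "\<exists>q. two_dist_rep n N E q" using that unfolding representable_def N_def .
    then obtain q where repq: "two_dist_rep n N E q" by (elim exE)
    obtain b1 b2 where b12: "b2 < b1" "0 \<le> b2"
      and sqb: "\<forall>i<N. \<forall>j<N. (\<Sum>k<n. (q i k - q j k)^2) = b2^2 + (b1^2 - b2^2) * (if E i j then 1 else 0) - (if i = j then b2^2 else 0)"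
      by (rule rep_unpack[OF repq sg])
    define B1 where "B1 = b1^2"
    define B2 where "B2 = b2^2"
    have B12: "B2 < B1" unfolding B1_def B2_def using b12 by (simp add: power_strict_mono)
    have sqq: "\<forall>i<N. \<forall>j<N. (\<Sum>k<n. (q i k - q j k)^2) = B2 + (B1 - B2) * aa i j - (if i = j then B2 else 0)"
      using sqb unfolding B1_def B2_def aa_def by simp
    define \<kappa>' where "\<kappa>' = (B1 - B2) / 2"
    define \<theta>' where "\<theta>' = B2 / (B1 - B2)"
    have kp': "\<kappa>' > 0" unfolding \<kappa>'_def using B12 by simp
    have kt': "\<kappa>' * \<theta>' = B2 / 2"
    proof -
      have "B1 - B2 \<noteq> 0" using B12 by simp
      then show ?thesis unfolding \<kappa>'_def \<theta>'_def by (simp add: field_simps)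
    qed
    have qq: "(\<Sum>k<n. (\<Sum>i<N. x i * q i k)^2) = \<kappa>' * (\<theta>' * sp.dot x x - sp.dot x (sp.Ax x))"
      if sx: "sp.sumN x = 0" for x
    proof -
      have s0: "(\<Sum>i<N. x i) = 0" using sx unfolding sp.sumN_def .
      have "(\<Sum>k<n. (\<Sum>i<N. x i * q i k)^2) = (\<Sum>k<n. (\<Sum>i<N. x i * (q i k - (\<lambda>_. 0) k))^2)" by simp
      also have "\<dots> = 2 * (\<Sum>i<N. x i * ((\<Sum>k<n. (q i k - (\<lambda>_. 0) k)^2) / 2)) * (\<Sum>i<N. x i) + (- B2 / 2) * (\<Sum>i<N. x i)^2
        + (- (B1 - B2) / 2) * (\<Sum>i<N. x i * (\<Sum>j<N. aa i j * x j)) + (B2 / 2) * (\<Sum>i<N. x i * x i)"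
        by (rule rep_quad[OF sqq])
      also have "\<dots> = \<kappa>' * (\<theta>' * sp.dot x x - sp.dot x (sp.Ax x))"
      proof -
        have gen: "2 * P * S + (- B2 / 2) * S^2 + (- (B1 - B2) / 2) * T + (B2 / 2) * U = \<kappa>' * (\<theta>' * U - T)"
          if "S = 0" for P S T U :: real
        proof -
          have e1: "\<kappa>' * (\<theta>' * U - T) = (\<kappa>' * \<theta>') * U - \<kappa>' * T" by (simp add: right_diff_distrib mult.assoc)
          have e2: "(\<kappa>' * \<theta>') * U - \<kappa>' * T = (B2 / 2) * U - ((B1 - B2) / 2) * T"
            unfolding kt' unfolding \<kappa>'_def ..
          show ?thesis using that e1 e2 by (simp add: field_simps)
        qed
        show ?thesis unfolding sp.dot_def sp.Ax_def by (rule gen[OF s0])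
      qed
      finally show ?thesis .
    qed
    have F: "\<theta>' * sp.dot x x - sp.dot x (sp.Ax x) \<ge> 0" if "sp.sumN x = 0" for x
    proof -
      have "0 \<le> (\<Sum>k<n. (\<Sum>i<N. x i * q i k)^2)" by (rule sum_nonneg) simp
      then show ?thesis unfolding qq[OF that] using kp' by (simp add: zero_le_mult_iff)
    qed
    have Z: "\<theta>' * sp.dot x x - sp.dot x (sp.Ax x) = 0"
      if "sp.sumN x = 0" "\<forall>k<n. (\<Sum>i<N. q i k * x i) = 0" for x
    proof -
      have "(\<Sum>k<n. (\<Sum>i<N. x i * q i k)^2) = 0" using that(2) by (simp add: mult.commute)
      then show ?thesis unfolding qq[OF that(1)] using kp' by simp
    qed
    have "N - 1 - n \<le> co.mult'"
      by (rule co.forward[where n = n and \<theta>' = \<theta>' and L = "\<lambda>k i. q i k"]) (use assms(2) F Z in \<open>auto simp: N_def\<close>)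
    then have "N - 1 - n \<le> card {i. 1 \<le> i \<and> i < d + 2 \<and> lam i = lam 1}" unfolding mult_eq' .
    then show ?thesis unfolding N_def by simp
  qed
  have II: "spherically_representable n (d + 2) E"
    if C: "d + 1 - n \<le> card {i. 1 \<le> i \<and> i < d + 2 \<and> lam i = lam 1}"
  proof (rule co.backward)
    fix J :: "nat set" and X :: "nat \<Rightarrow> nat \<Rightarrow> real"
    assume fJ: "finite J" and cJ: "card J = co.mult'" and s0: "\<And>t. t\<in>J \<Longrightarrow> sp.sumN (X t) = 0"
      and K0: "\<And>t. t\<in>J \<Longrightarrow> co.Kf (X t) = 0"
      and ind: "\<And>\<beta>. (\<forall>i<N. (\<Sum>t\<in>J. \<beta> t * X t i) = 0) \<Longrightarrow> (\<forall>t\<in>J. \<beta> t = 0)"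
    have rel2: "(\<Sum>i<N. X t i * p i k) = 0" if t: "t\<in>J" and k: "k<d" for t k
    proof -
      have "\<theta> * (\<Sum>i<N. X t i * X t i) - (\<Sum>i<N. X t i * (\<Sum>j<N. aa i j * X t j)) + s' * (\<Sum>i<N. X t i)^2 = 0"
        using K0[OF t] unfolding co.Kf_def sp.dot_def sp.Ax_def sp.sumN_def .
      then have "(\<Sum>k<d. (\<Sum>i<N. X t i * (p i k - c k))^2) = 0" unfolding sphq by simp
      then have "\<forall>k\<in>{..<d}. (\<Sum>i<N. X t i * (p i k - c k))^2 = 0"
        using sum_nonneg_eq_0_iff[of "{..<d}" "\<lambda>k. (\<Sum>i<N. X t i * (p i k - c k))^2"] by simp
      then have z: "(\<Sum>i<N. X t i * (p i k - c k)) = 0" using k by simp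
      have "(\<Sum>i<N. X t i * (p i k - c k)) = (\<Sum>i<N. X t i * p i k) - (\<Sum>i<N. X t i) * c k"
        by (simp add: right_diff_distrib sum_subtractf sum_distrib_right)
      then show ?thesis using z s0[OF t] unfolding sp.sumN_def by simp
    qed
    have cJ': "Suc (d + 1) \<le> card J + n + 1" using C cJ mult_eq' by simp
    have emb: "\<exists>p' c' \<rho>'. (\<forall>i<Suc (d+1). \<forall>k\<ge>n. p' i k = 0) \<and> (\<forall>k\<ge>n. c' k = 0)
       \<and> (\<forall>i<Suc (d+1). \<forall>j<Suc (d+1). (\<Sum>k<n. (p' i k - p' j k)^2) = (\<Sum>k<d. (p i k - p j k)^2))
       \<and> (\<forall>i<Suc (d+1). (\<Sum>k<n. (p' i k - c' k)^2) = \<rho>')"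
    proof (rule embed[where K = "d + 1" and m = d and p = p and c = c and \<rho> = "r^2" and J = J and n = n and X = X])
      show "\<And>i. i < Suc (d + 1) \<Longrightarrow> (\<Sum>k<d. (p i k - c k)^2) = r^2" unfolding Nd[symmetric] by (rule cen)
      show "finite J" by (rule fJ)
      show "Suc (d + 1) \<le> card J + n + 1" by (rule cJ')
      show "\<And>t. t\<in>J \<Longrightarrow> (\<Sum>i<Suc (d + 1). X t i) = 0" unfolding Nd[symmetric]
        using s0 unfolding sp.sumN_def .
      show "\<And>t k. t\<in>J \<Longrightarrow> k<d \<Longrightarrow> (\<Sum>i<Suc (d + 1). X t i * p i k) = 0" unfolding Nd[symmetric] by (rule rel2)
      show "\<And>\<beta>. (\<forall>i<Suc (d + 1). (\<Sum>t\<in>J. \<beta> t * X t i) = 0) \<Longrightarrow> (\<forall>t\<in>J. \<beta> t = 0)" unfolding Nd[symmetric] by (rule ind)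
    qed
    then obtain p' c' \<rho>' where d1: "\<forall>i<N. \<forall>k\<ge>n. p' i k = 0" and d2: "\<forall>k\<ge>n. c' k = 0"
       and d3: "\<forall>i<N. \<forall>j<N. (\<Sum>k<n. (p' i k - p' j k)^2) = (\<Sum>k<d. (p i k - p j k)^2)"
       and d4: "\<forall>i<N. (\<Sum>k<n. (p' i k - c' k)^2) = \<rho>'"
      unfolding Nd[symmetric] by (elim exE conjE)
    have "spherically_representable n N E" by (rule sph_from_embed[OF rep N2 d1 d2 d3 d4])
    then show "spherically_representable n (d + 2) E" unfolding N_def .
  qed
  have III: "representable n (d + 2) E" if "spherically_representable n (d + 2) E"
    using that unfolding spherically_representable_def representable_def by blast
  show ?thesis using I II III by blast
qed


end
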